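(* In the process algebra $\mathcal{G}$ described in the context, for all $\mathbb{P}_u,\mathbb{P}_v,\mathbb{P},\mathbb{Q}$ (as defined in the context) and all $W\in\mathcal{W}$: (1) $D\simeq D\|G_u\mathbb{P}_u\simeq D\|G_v'\mathbb{P}_v\mathbb{P}_u\simeq D\|Z\mathbb{P}_v\mathbb{P}_u\simeq D\|\mathbb{P}_v\mathbb{P}_u\simeq D\|W\mathbb{P}_v\mathbb{P}_u$; (2) $C\simeq C\|G\mathbb{P}\simeq C\|\mathbb{P}\simeq C\|W\mathbb{P}\simeq C\|G_v\mathbb{P}_v$; (3) $C'\simeq C'\|G'\mathbb{Q}\simeq C'\|G_v\mathbb{Q}\simeq C'\|Z\mathbb{Q}\simeq C'\|\mathbb{Q}$.
   Context: Process algebras: a triple $(\mathcal{C},\mathcal{A},\Delta)$ of finitely many constants, actions (including silent $\tau$) and rules $X\stackrel{\ell}{\longrightarrow}P$. Processes: $P::=\epsilon\mid X\mid PP'\mid P\|P'$, sequential composition associative, parallel composition associative and commutative, $\epsilon$ a unit for both. Semantics: rules of $\Delta$; if $P\stackrel{\ell}{\longrightarrow}P'$ then $PQ\stackrel{\ell}{\longrightarrow}P'Q$, $P\|Q\stackrel{\ell}{\longrightarrow}P'\|Q$, $Q\|P\stackrel{\ell}{\longrightarrow}Q\|P'$. $\Longrightarrow$ is the reflexive transitive closure of $\stackrel{\tau}{\longrightarrow}$. Branching bisimilarity $\simeq$ is the largest relation $\mathcal{B}$ such that whenever $P\mathcal{B}Q$ and $P\stackrel{\ell}{\longrightarrow}P'$,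 either $Q\Longrightarrow Q''\stackrel{\ell}{\longrightarrow}Q'$ with $P\mathcal{B}Q''$ and $P'\mathcal{B}Q'$, or $\ell=\tau$ and $P'\mathcal{B}Q$; and symmetrically. The algebra $\mathcal{G}$: fix a finite alphabet $\Sigma$ with $|\Sigma|\ge2$ and a Post Correspondence instance $\mathrm{INST}=\{(u_1,v_1),\dots,(u_n,v_n)\}$ with $u_k,v_k\in\Sigma^{+}$; let $\mathcal{N}=\{1,\dots,n\}$. Actions: $\{\lambda_U,\lambda_V,\lambda_D,\lambda_I,\lambda_S,\lambda_Z\}\cup\mathcal{N}\cup\Sigma\cup\{\tau\}$. Constants: $X,Y,Z,I,S,C,C',D,G,G',G_u,G_v,G_v'$, $U_k,V_k$ ($k\in\mathcal{N}$), and $W(\omega,k),W(\omega,0)$ for $k\in\mathcal{N}$ and $\omega$ a (possibly empty) suffix of $u_k$ or of $v_k$; $\mathcal{W}$ is the set of these $W$-constants. Rules (with $k$ ranging over $\mathcal{N}$, $a$ over $\Sigma$, $W$ over $\mathcal{W}$): $X\stackrel{\lambda_U}{\longrightarrow}D\|G_v$, $X\stackrel{\tau}{\longrightarrow}D$, $Y\stackrel{\tau}{\longrightarrow}D$, $D\stackrel{\tau}{\longrightarrow}D\|G_u$, $D\stackrel{\lambda_D}{\longrightarrow}C$; $G_u\stackrel{\tau}{\longrightarrow}G_uU_k$, $G_u\stackrel{\lambda_U}{\longrightarrow}G_vU_k$, $G_u\stackrel{\tau}{\longrightarrow}G_v'$, $G_v'\stackrel{\tau}{\longrightarrow}G_v'V_k$,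 $G_v'\stackrel{\tau}{\longrightarrow}Z$; $G_v\stackrel{\tau}{\longrightarrow}G_vV_k$, $G_v\stackrel{\tau}{\longrightarrow}\epsilon$, $G_v\stackrel{\lambda_V}{\longrightarrow}Z$, $Z\stackrel{\tau}{\longrightarrow}\epsilon$, $Z\stackrel{\lambda_Z}{\longrightarrow}\epsilon$; $C\stackrel{\lambda_I}{\longrightarrow}I$, $C\stackrel{\lambda_S}{\longrightarrow}S$, $C\stackrel{\tau}{\longrightarrow}C\|G$, $C\stackrel{\tau}{\longrightarrow}C\|G_v$; $G\stackrel{\tau}{\longrightarrow}GU_k$, $G\stackrel{\tau}{\longrightarrow}GV_k$, $G\stackrel{\tau}{\longrightarrow}\epsilon$; $I\stackrel{\lambda_I}{\longrightarrow}C'$, $I\stackrel{k}{\longrightarrow}I$, $S\stackrel{\lambda_S}{\longrightarrow}C'$, $S\stackrel{a}{\longrightarrow}S$, $C'\stackrel{\tau}{\longrightarrow}C'\|G'$, $C'\stackrel{\tau}{\longrightarrow}\epsilon$; $G'\stackrel{\tau}{\longrightarrow}G'U_k$, $G'\stackrel{\tau}{\longrightarrow}G'V_k$, $G'\stackrel{\tau}{\longrightarrow}G'W$, $G'\stackrel{\tau}{\longrightarrow}G_v$, $G'\stackrel{\tau}{\longrightarrow}Z$; $U_k\stackrel{\tau}{\longrightarrow}W(u_k,k)$, $V_k\stackrel{\tau}{\longrightarrow}W(v_k,k)$; $W(a\omega,k)\stackrel{a}{\longrightarrow}W(\omega,k)$, $W(a\omega,0)\stackrel{a}{\longrightarrow}W(\omega,0)$,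 $W(\omega,k)\stackrel{k}{\longrightarrow}W(\omega,0)$, $W(a\omega,k)\stackrel{\tau}{\longrightarrow}W(\omega,k)$, $W(a\omega,0)\stackrel{\tau}{\longrightarrow}W(\omega,0)$, $W(\omega,k)\stackrel{\tau}{\longrightarrow}W(\omega,0)$, $W(\epsilon,0)\stackrel{\tau}{\longrightarrow}\epsilon$. Notation: $\mathbb{P}_u$ (resp. $\mathbb{P}_v$) denotes a sequential composition (possibly empty, i.e. $\epsilon$) of constants from $\{U_k:k\in\mathcal{N}\}$ (resp. $\{V_k:k\in\mathcal{N}\}$); $\mathbb{P}$ (resp. $\mathbb{Q}$) denotes a sequential composition (possibly empty) of constants from $\{U_k,V_k:k\in\mathcal{N}\}$ (resp. $\{U_k,V_k:k\in\mathcal{N}\}\cup\mathcal{W}$). *)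

theory Defs
  imports Main
begin

datatype 'a const =
    cX | cY | cZ | cI | cS | cC | cC' | cD | cG | cG' | cGu | cGv | cGv'
  | cU nat | cV nat | cW "'a list" nat

datatype 'a act = LU | LV | LD | LI | LS | LZ | Num nat | Sym 'a | Tau

datatype 'a proc = Eps | Cst "'a const" | Seq "'a proc" "'a proc" | Par "'a proc" "'a proc"

inductive scong :: "'a proc \<Rightarrow> 'a proc \<Rightarrow> bool" where
  sc_refl: "scong P P"
| sc_sym: "scong P Q \<Longrightarrow> scong Q P"
| sc_trans: "scong P Q \<Longrightarrow> scong Q R \<Longrightarrow> scong P R"
| sc_seq: "scong P P' \<Longrightarrow> scong Q Q' \<Longrightarrow> scong (Seq P Q) (Seq P' Q')"
| sc_par: "scong P P' \<Longrightarrow> scong Q Q' \<Longrightarrow> scong (Par P Q) (Par P' Q')"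
| sc_seq_assoc: "scong (Seq (Seq P Q) R) (Seq P (Seq Q R))"
| sc_par_assoc: "scong (Par (Par P Q) R) (Par P (Par Q R))"
| sc_par_comm: "scong (Par P Q) (Par Q P)"
| sc_seq_eps_l: "scong (Seq Eps P) P"
| sc_seq_eps_r: "scong (Seq P Eps) P"
| sc_par_eps: "scong (Par P Eps) P"

(* PCP instance given as a list [(u_1,v_1),...,(u_n,v_n)] *)
definition idx :: "('a list \<times> 'a list) list \<Rightarrow> nat set" where
  "idx inst = {1..length inst}"

definition uw :: "('a list \<times> 'a list) list \<Rightarrow> nat \<Rightarrow> 'a list" where
  "uw inst k = fst (inst ! (k - 1))"

definition vw :: "('a list \<times> 'a list) list \<Rightarrow> nat \<Rightarrow> 'a list" where
  "vw inst k = snd (inst ! (k - 1))"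

definition is_suffix :: "'a list \<Rightarrow> 'a list \<Rightarrow> bool" where
  "is_suffix w x \<longleftrightarrow> (\<exists>p. p @ w = x)"

definition Wset :: "('a list \<times> 'a list) list \<Rightarrow> 'a const set" where
  "Wset inst =
     {cW w k | w k. k \<in> idx inst \<and> (is_suffix w (uw inst k) \<or> is_suffix w (vw inst k))}
   \<union> {cW w 0 | w. \<exists>k \<in> idx inst. is_suffix w (uw inst k) \<or> is_suffix w (vw inst k)}"

definition Uset :: "('a list \<times> 'a list) list \<Rightarrow> 'a const set" where
  "Uset inst = {cU k | k. k \<in> idx inst}"

definition Vset :: "('a list \<times> 'a list) list \<Rightarrow> 'a const set" where
  "Vset inst = {cV k | k. k \<in> idx inst}"

inductive rule :: "'a set \<Rightarrow> ('a list \<times> 'a list) list \<Rightarrow> 'a const \<Rightarrow> 'a act \<Rightarrow> 'a proc \<Rightarrow> bool"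
  for Sig inst where
  r1: "rule Sig inst cX LU (Par (Cst cD) (Cst cGv))"
| r2: "rule Sig inst cX Tau (Cst cD)"
| r3: "rule Sig inst cY Tau (Cst cD)"
| r4: "rule Sig inst cD Tau (Par (Cst cD) (Cst cGu))"
| r5: "rule Sig inst cD LD (Cst cC)"
| r6: "k \<in> idx inst \<Longrightarrow> rule Sig inst cGu Tau (Seq (Cst cGu) (Cst (cU k)))"
| r7: "k \<in> idx inst \<Longrightarrow> rule Sig inst cGu LU (Seq (Cst cGv) (Cst (cU k)))"
| r8: "rule Sig inst cGu Tau (Cst cGv')"
| r9: "k \<in> idx inst \<Longrightarrow> rule Sig inst cGv' Tau (Seq (Cst cGv') (Cst (cV k)))"
| r10: "rule Sig inst cGv' Tau (Cst cZ)"
| r11: "k \<in> idx inst \<Longrightarrow> rule Sig inst cGv Tau (Seq (Cst cGv) (Cst (cV k)))"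
| r12: "rule Sig inst cGv Tau Eps"
| r13: "rule Sig inst cGv LV (Cst cZ)"
| r14: "rule Sig inst cZ Tau Eps"
| r15: "rule Sig inst cZ LZ Eps"
| r16: "rule Sig inst cC LI (Cst cI)"
| r17: "rule Sig inst cC LS (Cst cS)"
| r18: "rule Sig inst cC Tau (Par (Cst cC) (Cst cG))"
| r19: "rule Sig inst cC Tau (Par (Cst cC) (Cst cGv))"
| r20: "k \<in> idx inst \<Longrightarrow> rule Sig inst cG Tau (Seq (Cst cG) (Cst (cU k)))"
| r21: "k \<in> idx inst \<Longrightarrow> rule Sig inst cG Tau (Seq (Cst cG) (Cst (cV k)))"
| r22: "rule Sig inst cG Tau Eps"
| r23: "rule Sig inst cI LI (Cst cC')"
| r24: "k \<in> idx inst \<Longrightarrow> rule Sig inst cI (Num k) (Cst cI)"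
| r25: "rule Sig inst cS LS (Cst cC')"
| r26: "a \<in> Sig \<Longrightarrow> rule Sig inst cS (Sym a) (Cst cS)"
| r27: "rule Sig inst cC' Tau (Par (Cst cC') (Cst cG'))"
| r28: "rule Sig inst cC' Tau Eps"
| r29: "k \<in> idx inst \<Longrightarrow> rule Sig inst cG' Tau (Seq (Cst cG') (Cst (cU k)))"
| r30: "k \<in> idx inst \<Longrightarrow> rule Sig inst cG' Tau (Seq (Cst cG') (Cst (cV k)))"
| r31: "W \<in> Wset inst \<Longrightarrow> rule Sig inst cG' Tau (Seq (Cst cG') (Cst W))"
| r32: "rule Sig inst cG' Tau (Cst cGv)"
| r33: "rule Sig inst cG' Tau (Cst cZ)"
| r34: "k \<in> idx inst \<Longrightarrow> rule Sig inst (cU k) Tau (Cst (cW (uw inst k) k))"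
| r35: "k \<in> idx inst \<Longrightarrow> rule Sig inst (cV k) Tau (Cst (cW (vw inst k) k))"
| r36: "k \<in> idx inst \<Longrightarrow> cW (a # w) k \<in> Wset inst \<Longrightarrow> a \<in> Sig \<Longrightarrow>
         rule Sig inst (cW (a # w) k) (Sym a) (Cst (cW w k))"
| r37: "cW (a # w) 0 \<in> Wset inst \<Longrightarrow> a \<in> Sig \<Longrightarrow>
         rule Sig inst (cW (a # w) 0) (Sym a) (Cst (cW w 0))"
| r38: "k \<in> idx inst \<Longrightarrow> cW w k \<in> Wset inst \<Longrightarrow>
         rule Sig inst (cW w k) (Num k) (Cst (cW w 0))"
| r39: "k \<in> idx inst \<Longrightarrow> cW (a # w) k \<in> Wset inst \<Longrightarrow> a \<in> Sig \<Longrightarrow>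
         rule Sig inst (cW (a # w) k) Tau (Cst (cW w k))"
| r40: "cW (a # w) 0 \<in> Wset inst \<Longrightarrow> a \<in> Sig \<Longrightarrow>
         rule Sig inst (cW (a # w) 0) Tau (Cst (cW w 0))"
| r41: "k \<in> idx inst \<Longrightarrow> cW w k \<in> Wset inst \<Longrightarrow>
         rule Sig inst (cW w k) Tau (Cst (cW w 0))"
| r42: "cW [] 0 \<in> Wset inst \<Longrightarrow> rule Sig inst (cW [] 0) Tau Eps"

inductive step :: "'a set \<Rightarrow> ('a list \<times> 'a list) list \<Rightarrow> 'a proc \<Rightarrow> 'a act \<Rightarrow> 'a proc \<Rightarrow> bool"
  for Sig inst where
  st_rule: "rule Sig inst c l P \<Longrightarrow> step Sig inst (Cst c) l P"
| st_seq: "step Sig inst P l P' \<Longrightarrow> step Sig inst (Seq P Q) l (Seq P' Q)"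
| st_parl: "step Sig inst P l P' \<Longrightarrow> step Sig inst (Par P Q) l (Par P' Q)"
| st_parr: "step Sig inst P l P' \<Longrightarrow> step Sig inst (Par Q P) l (Par Q P')"
| st_cong: "scong P P1 \<Longrightarrow> step Sig inst P1 l P1' \<Longrightarrow> scong P1' P' \<Longrightarrow> step Sig inst P l P'"

definition tau_steps :: "'a set \<Rightarrow> ('a list \<times> 'a list) list \<Rightarrow> 'a proc \<Rightarrow> 'a proc \<Rightarrow> bool" where
  "tau_steps Sig inst = (\<lambda>P Q. step Sig inst P Tau Q)\<^sup>*\<^sup>*"

definition bb_sim :: "'a set \<Rightarrow> ('a list \<times> 'a list) list \<Rightarrow> ('a proc \<Rightarrow> 'a proc \<Rightarrow> bool) \<Rightarrow> bool" where
  "bb_sim Sig inst B \<longleftrightarrow>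
     (\<forall>P Q l P'. B P Q \<and> step Sig inst P l P' \<longrightarrow>
        (\<exists>Q'' Q'. tau_steps Sig inst Q Q'' \<and> step Sig inst Q'' l Q' \<and> B P Q'' \<and> B P' Q')
        \<or> (l = Tau \<and> B P' Q))"

definition branching_bisim :: "'a set \<Rightarrow> ('a list \<times> 'a list) list \<Rightarrow> ('a proc \<Rightarrow> 'a proc \<Rightarrow> bool) \<Rightarrow> bool" where
  "branching_bisim Sig inst B \<longleftrightarrow> bb_sim Sig inst B \<and> bb_sim Sig inst (\<lambda>P Q. B Q P)"

definition bbisimilar :: "'a set \<Rightarrow> ('a list \<times> 'a list) list \<Rightarrow> 'a proc \<Rightarrow> 'a proc \<Rightarrow> bool" where
  "bbisimilar Sig inst P Q \<longleftrightarrow> (\<exists>B. branching_bisim Sig inst B \<and> B P Q)"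

fun seqs :: "'a const list \<Rightarrow> 'a proc" where
  "seqs [] = Eps"
| "seqs (c # cs) = Seq (Cst c) (seqs cs)"

end

theory Submission
  imports Defs "HOL-Library.Multiset"
begin

definition lst :: "'x list \<Rightarrow> 'x list multiset" where
  "lst xs = (if xs = [] then {#} else {#xs#})"

fun aseq :: "'x list multiset option \<Rightarrow> 'x list multiset option \<Rightarrow> 'x list multiset option" where
  "aseq (Some A) (Some B) = (if A = {#} then Some B else if B = {#} then Some A
     else if (\<exists>a. A = {#a#}) \<and> (\<exists>b. B = {#b#}) then Some {# the_elem (set_mset A) @ the_elem (set_mset B) #} else None)"
| "aseq _ _ = None"

fun padd :: "'x multiset option \<Rightarrow> 'x multiset option \<Rightarrow> 'x multiset option" where
  "padd (Some A) (Some B) = Some (A + B)"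
| "padd _ _ = None"

fun nf :: "'a proc \<Rightarrow> 'a const list multiset option" where
  "nf Eps = Some {#}"
| "nf (Cst c) = Some {#[c]#}"
| "nf (Seq P Q) = aseq (nf P) (nf Q)"
| "nf (Par P Q) = padd (nf P) (nf Q)"

lemma aseq_SomeE: "aseq (Some A) (Some B) = Some M \<Longrightarrow>
  (A={#} \<and> M=B) \<or> (A \<noteq> {#} \<and> B={#} \<and> M=A) \<or> (\<exists>a b. A={#a#} \<and> B={#b#} \<and> M={#a@b#})"
  by (auto split: if_splits)

lemma aseq_emp_l[simp]: "aseq (Some {#}) X = X" by (cases X) auto
lemma aseq_emp_r[simp]: "aseq X (Some {#}) = X" by (cases X) auto
lemma aseq_None_r[simp]: "aseq X None = None" by (cases X) auto
lemma aseq_sing[simp]: "aseq (Some {#a#}) (Some {#b#}) = Some {#a@b#}" by simp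

lemma aseq_assoc: "aseq (aseq A B) C = aseq A (aseq B C)"
  by (cases A; cases B; cases C) auto

declare aseq.simps(1)[simp del]

lemma padd_emp_l[simp]: "padd (Some {#}) X = X" by (cases X) auto
lemma padd_emp_r[simp]: "padd X (Some {#}) = X" by (cases X) auto
lemma padd_None_r[simp]: "padd X None = None" by (cases X) auto
lemma padd_comm: "padd A B = padd B A" by (cases A; cases B) (auto simp: add.commute)
lemma padd_assoc: "padd (padd A B) C = padd A (padd B C)" by (cases A; cases B; cases C) (auto simp: add.assoc)

lemma scong_nf: "scong P Q \<Longrightarrow> nf P = nf Q"
proof (induction rule: scong.induct)
  case (sc_par_comm P Q)
  then show ?case by (simp add: padd_comm)
qed (simp_all add: aseq_assoc padd_assoc)

lemma padd_SS: "padd (Some A) (padd (Some B) X) = padd (Some (A+B)) X" by (cases X) auto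
lemma padd_SS2: "padd (padd (Some B) X) (Some A) = padd (Some (B+A)) X" by (cases X) (auto simp: add_ac)

lemma nf_nonempty: "nf P = Some M \<Longrightarrow> [] \<notin># M"
proof (induction P arbitrary: M)
  case (Seq P Q)
  then show ?case
    by (cases "nf P"; cases "nf Q") (auto dest!: aseq_SomeE)
next
  case (Par P Q)
  then show ?case by (cases "nf P"; cases "nf Q") auto
qed auto

lemma nf_empty_scong: "nf P = Some {#} \<Longrightarrow> scong P Eps"
proof (induction P)
  case (Seq P Q)
  then have "nf P = Some {#}" "nf Q = Some {#}"
    by (cases "nf P"; cases "nf Q"; auto dest!: aseq_SomeE)+
  with Seq show ?case by (simp add: sc_trans[OF sc_seq sc_seq_eps_l])
next
  case (Par P Q)
  then have "nf P = Some {#}" "nf Q = Some {#}"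
    by (cases "nf P"; cases "nf Q"; auto)+
  with Par show ?case by (simp add: sc_trans[OF sc_par sc_par_eps])
qed (auto intro: sc_refl)

lemma lst_app: "b \<noteq> [] \<Longrightarrow> aseq (Some (lst xs)) (Some {#b#}) = Some (lst (xs @ b))"
  by (auto simp: lst_def)

lemma step_sound:
  "step Sig inst P l P' \<Longrightarrow> nf P = Some M \<Longrightarrow>
   \<exists>c xs M0 R. M = add_mset (c#xs) M0 \<and> rule Sig inst c l R \<and>
     nf P' = padd (Some M0) (aseq (nf R) (Some (lst xs)))"
proof (induction arbitrary: M rule: step.induct)
  case (st_rule c l P)
  then show ?case by (intro exI[of _ c] exI[of _ "[]"]) (auto simp: lst_def)
next
  case (st_seq P l P' Q)
  obtain A B where A: "nf P = Some A" and B: "nf Q = Some B"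
    using st_seq.prems by (cases "nf P"; cases "nf Q") auto
  from st_seq.IH[OF A] obtain c xs M0 R where
    h: "A = add_mset (c#xs) M0" "rule Sig inst c l R" "nf P' = padd (Some M0) (aseq (nf R) (Some (lst xs)))"
    by blast
  show ?case
  proof (cases "B = {#}")
    case True
    then show ?thesis using st_seq.prems A B h by auto
  next
    case False
    then obtain b where b: "B = {#b#}" and M0: "M0 = {#}" using st_seq.prems A B h(1)
      by (auto dest!: aseq_SomeE)
    have "b \<noteq> []" using nf_nonempty[OF B] b by auto
    then show ?thesis using st_seq.prems A B h b M0
      by (intro exI[of _ c] exI[of _ "xs@b"] exI[of _ "{#}"] exI[of _ R])
         (auto simp: aseq_assoc lst_app simp del: aseq.simps)
  qed
next
  case (st_parl P l P' Q)
  obtain A B where A: "nf P = Some A" and B: "nf Q = Some B"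
    using st_parl.prems by (cases "nf P"; cases "nf Q") auto
  from st_parl.IH[OF A] obtain c xs M0 R where
    h: "A = add_mset (c#xs) M0" "rule Sig inst c l R" "nf P' = padd (Some M0) (aseq (nf R) (Some (lst xs)))"
    by blast
  show ?case using st_parl.prems A B h
    by (intro exI[of _ c] exI[of _ "xs"] exI[of _ "M0 + B"] exI[of _ R])
       (auto simp: padd_SS padd_SS2 add_ac)
next
  case (st_parr P l P' Q)
  obtain A B where A: "nf P = Some A" and B: "nf Q = Some B"
    using st_parr.prems by (cases "nf P"; cases "nf Q") auto
  from st_parr.IH[OF A] obtain c xs M0 R where
    h: "A = add_mset (c#xs) M0" "rule Sig inst c l R" "nf P' = padd (Some M0) (aseq (nf R) (Some (lst xs)))"
    by blast
  show ?case using st_parr.prems A B h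
    by (intro exI[of _ c] exI[of _ "xs"] exI[of _ "B + M0"] exI[of _ R])
       (auto simp: padd_SS padd_SS2 add_ac)
next
  case (st_cong P P1 l P1' P')
  then show ?case using scong_nf by metis
qed

lemma step_compl:
  "nf P = Some (add_mset (c#xs) M0) \<Longrightarrow> rule Sig inst c l R \<Longrightarrow>
   \<exists>P'. step Sig inst P l P' \<and> nf P' = padd (Some M0) (aseq (nf R) (Some (lst xs)))"
proof (induction P arbitrary: M0 xs)
  case Eps then show ?case by simp
next
  case (Cst c')
  then show ?case by (auto intro!: st_rule simp: lst_def)
next
  case (Par P Q)
  obtain A B where A: "nf P = Some A" and B: "nf Q = Some B"
    using Par.prems by (cases "nf P"; cases "nf Q") auto
  have e: "A + B = add_mset (c#xs) M0" using Par.prems A B by simp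
  show ?case
  proof (cases "c#xs \<in># A")
    case True
    then obtain A0 where A0: "A = add_mset (c#xs) A0" by (metis mset_add)
    from Par.IH(1)[OF _ Par.prems(2), of xs A0] A A0 obtain P' where
      "step Sig inst P l P'" "nf P' = padd (Some A0) (aseq (nf R) (Some (lst xs)))" by auto
    moreover have "M0 = A0 + B" using e A0 by simp
    ultimately show ?thesis using B
      by (intro exI[of _ "Par P' Q"]) (auto intro: st_parl simp: padd_SS padd_SS2 add_ac)
  next
    case False
    then have "c#xs \<in># B" using e by (metis add_mset_add_single union_iff union_single_eq_member)
    then obtain B0 where B0: "B = add_mset (c#xs) B0" by (metis mset_add)
    from Par.IH(2)[OF _ Par.prems(2), of xs B0] B B0 obtain Q' where
      "step Sig inst Q l Q'" "nf Q' = padd (Some B0) (aseq (nf R) (Some (lst xs)))" by auto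
    moreover have "M0 = A + B0" using e B0 by simp
    ultimately show ?thesis using A
      by (intro exI[of _ "Par P Q'"]) (auto intro: st_parr simp: padd_SS padd_SS2 add_ac)
  qed
next
  case (Seq P Q)
  obtain A B where A: "nf P = Some A" and B: "nf Q = Some B"
    using Seq.prems by (cases "nf P"; cases "nf Q") auto
  show ?case
  proof (cases "A = {#}")
    case True
    then have sc: "scong (Seq P Q) Q"
      using nf_empty_scong A by (meson sc_refl sc_seq sc_seq_eps_l sc_trans)
    from Seq.IH(2)[OF _ Seq.prems(2), of xs M0] Seq.prems A B True obtain Q' where
      "step Sig inst Q l Q'" "nf Q' = padd (Some M0) (aseq (nf R) (Some (lst xs)))" by auto
    then show ?thesis using sc by (meson sc_refl st_cong)
  next
    case An: False
    show ?thesis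
    proof (cases "B = {#}")
      case True
      from Seq.IH(1)[OF _ Seq.prems(2), of xs M0] Seq.prems A B True obtain P' where
        "step Sig inst P l P'" "nf P' = padd (Some M0) (aseq (nf R) (Some (lst xs)))" by auto
      then show ?thesis using B True by (intro exI[of _ "Seq P' Q"]) (auto intro: st_seq)
    next
      case False
      then obtain a b where ab: "A = {#a#}" "B = {#b#}" using Seq.prems A B An
        by (auto dest!: aseq_SomeE)
      then have e: "a @ b = c # xs" "M0 = {#}" using Seq.prems A B by auto
      have "a \<noteq> []" "b \<noteq> []" using nf_nonempty[OF A] nf_nonempty[OF B] ab by auto
      then obtain xs1 where a: "a = c # xs1" "xs = xs1 @ b" using e by (cases a) auto
      from Seq.IH(1)[OF _ Seq.prems(2), of xs1 "{#}"] A ab a obtain P' where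
        "step Sig inst P l P'" "nf P' = aseq (nf R) (Some (lst xs1))" by auto
      then show ?thesis using B ab a e \<open>b \<noteq> []\<close>
        by (intro exI[of _ "Seq P' Q"]) (auto intro: st_seq simp: aseq_assoc lst_app simp del: aseq.simps)
    qed
  qed
qed



definition astep :: "'a set \<Rightarrow> ('a list \<times> 'a list) list \<Rightarrow> 'a const list multiset \<Rightarrow> 'a act \<Rightarrow> 'a const list multiset \<Rightarrow> bool" where
  "astep Sig inst M l M' \<longleftrightarrow> (\<exists>c xs M0 R. M = add_mset (c#xs) M0 \<and> rule Sig inst c l R \<and>
      padd (Some M0) (aseq (nf R) (Some (lst xs))) = Some M')"

abbreviation areach where "areach Sig inst \<equiv> (\<lambda>M M'. astep Sig inst M Tau M')\<^sup>*\<^sup>*"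

definition badc :: "'a const \<Rightarrow> bool" where
  "badc c \<longleftrightarrow> c \<in> {cX, cY, cD, cC, cC', cI, cS}"

definition good :: "'a const list multiset \<Rightarrow> bool" where
  "good M \<longleftrightarrow> (\<forall>x\<in>#M. \<forall>c\<in>set (butlast x). \<not> badc c)"

lemma lst_lst: "aseq (Some (lst r)) (Some (lst xs)) = Some (lst (r @ xs))"
  by (auto simp: lst_def)

lemma Wset_form: "W \<in> Wset inst \<Longrightarrow> \<exists>w k. W = cW w k"
  by (auto simp: Wset_def)

lemma rule_nf0: "rule Sig inst c l R \<Longrightarrow>
   (\<not> badc c \<and> (nf R = Some {#} \<or> (\<exists>r. nf R = Some {#r#} \<and> r \<noteq> [] \<and> (\<forall>d\<in>set r. \<not> badc d)))) \<or>
   (badc c \<and> (\<exists>Y. nf R = Some Y \<and> good Y))"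
  by (induction rule: rule.induct) (auto simp: badc_def good_def dest!: Wset_form)

lemma rule_nf: "rule Sig inst c l R \<Longrightarrow>
   (\<not> badc c \<and> (\<exists>r. nf R = Some (lst r) \<and> (\<forall>d\<in>set r. \<not> badc d))) \<or>
   (badc c \<and> (\<exists>Y. nf R = Some Y \<and> good Y))"
proof -
  assume "rule Sig inst c l R"
  from rule_nf0[OF this] show ?thesis
  proof (elim disjE conjE exE)
    assume "\<not> badc c" "nf R = Some {#}"
    then show ?thesis by (intro disjI1 conjI exI[of _ "[]"]) (auto simp: lst_def)
  next
    fix r assume "\<not> badc c" "nf R = Some {#r#}" "r \<noteq> []" "\<forall>d\<in>set r. \<not> badc d"
    then show ?thesis by (intro disjI1 conjI exI[of _ r]) (auto simp: lst_def)
  qed blast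
qed

lemma good_step:
  assumes "good (add_mset (c#xs) M0)" "rule Sig inst c l R"
  shows "\<exists>M'. padd (Some M0) (aseq (nf R) (Some (lst xs))) = Some M' \<and> good M'"
  using rule_nf[OF assms(2)]
proof
  assume "\<not> badc c \<and> (\<exists>r. nf R = Some (lst r) \<and> (\<forall>d\<in>set r. \<not> badc d))"
  then obtain r where r: "nf R = Some (lst r)" "\<forall>d\<in>set r. \<not> badc d" by blast
  have g: "good M0" "\<forall>d\<in>set (butlast (c#xs)). \<not> badc d" using assms(1) by (auto simp: good_def)
  have "\<forall>d\<in>set (butlast (r @ xs)). \<not> badc d"
  proof
    fix d assume "d \<in> set (butlast (r @ xs))"
    then have "d \<in> set r \<or> d \<in> set (butlast (c#xs))"
      by (cases "xs = []") (auto simp: butlast_append in_set_butlastD)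
    then show "\<not> badc d" using r g by auto
  qed
  then have "good (M0 + lst (r @ xs))" using g by (auto simp: good_def lst_def)
  moreover have "padd (Some M0) (aseq (nf R) (Some (lst xs))) = Some (M0 + lst (r @ xs))"
    using r(1) lst_lst[of r xs] by simp
  ultimately show ?thesis by blast
next
  assume "badc c \<and> (\<exists>Y. nf R = Some Y \<and> good Y)"
  then obtain Y where Y: "badc c" "nf R = Some Y" "good Y" by blast
  then have "xs = []" using assms(1) by (cases xs) (auto simp: good_def)
  then show ?thesis using Y assms(1) by (auto simp: good_def lst_def)
qed

lemma astep_good: "astep Sig inst M l M' \<Longrightarrow> good M \<Longrightarrow> good M'"
  unfolding astep_def using good_step by fastforce

lemma astep_ctx: "astep Sig inst M l M' \<Longrightarrow> astep Sig inst (M + X) l (M' + X)"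
  unfolding astep_def
  apply clarify
  subgoal for c xs M0 R
    apply (rule exI[of _ c], rule exI[of _ xs], rule exI[of _ "M0 + X"], rule exI[of _ R])
    apply (cases "aseq (nf R) (Some (lst xs))") apply (auto simp: add_ac)
    done
  done

lemma areach_ctx: "areach Sig inst M M' \<Longrightarrow> areach Sig inst (M + X) (M' + X)"
  by (induction rule: rtranclp_induct) (auto intro: rtranclp.rtrancl_into_rtrancl astep_ctx)

lemma astep_chain: "rule Sig inst c l R \<Longrightarrow> nf R = Some (lst r) \<Longrightarrow>
   astep Sig inst (add_mset (c#xs) M) l (M + lst (r @ xs))"
  unfolding astep_def
  apply (rule exI[of _ c], rule exI[of _ xs], rule exI[of _ M], rule exI[of _ R])
  using lst_lst[of r xs] by simp

lemma astep_single: "rule Sig inst c l R \<Longrightarrow> nf R = Some Y \<Longrightarrow>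
   astep Sig inst (add_mset [c] M) l (M + Y)"
  unfolding astep_def
  apply (rule exI[of _ c], rule exI[of _ "[]"], rule exI[of _ M], rule exI[of _ R])
  by (simp add: lst_def)

definition cstep where "cstep Sig inst x y \<longleftrightarrow> astep Sig inst {#x#} Tau (lst y)"
abbreviation creach where "creach Sig inst \<equiv> (cstep Sig inst)\<^sup>*\<^sup>*"

lemma cstep_app: "cstep Sig inst x y \<Longrightarrow> cstep Sig inst (x @ z) (y @ z)"
  unfolding cstep_def astep_def
proof -
  assume "\<exists>c xs M0 R. {#x#} = add_mset (c # xs) M0 \<and> rule Sig inst c Tau R \<and>
    padd (Some M0) (aseq (nf R) (Some (lst xs))) = Some (lst y)"
  then obtain c xs M0 R where h: "{#x#} = add_mset (c # xs) M0" "rule Sig inst c Tau R"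
    "padd (Some M0) (aseq (nf R) (Some (lst xs))) = Some (lst y)" by blast
  then have x: "x = c # xs" "M0 = {#}" by (auto simp: single_eq_add_mset)
  have "aseq (nf R) (Some (lst (xs @ z))) = aseq (aseq (nf R) (Some (lst xs))) (Some (lst z))"
    by (simp add: aseq_assoc lst_lst)
  also have "\<dots> = Some (lst (y @ z))" using h x by (simp add: lst_lst)
  finally show "\<exists>c' xs' M0' R'. {#x @ z#} = add_mset (c' # xs') M0' \<and> rule Sig inst c' Tau R' \<and>
      padd (Some M0') (aseq (nf R') (Some (lst xs'))) = Some (lst (y @ z))"
    using h x by (intro exI[of _ c] exI[of _ "xs @ z"] exI[of _ "{#}"] exI[of _ R]) auto
qed

lemma creach_app: "creach Sig inst x y \<Longrightarrow> creach Sig inst (x @ z) (y @ z)"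
  by (induction rule: rtranclp_induct) (auto intro: rtranclp.rtrancl_into_rtrancl cstep_app)

lemma cstep_nonempty: "cstep Sig inst x y \<Longrightarrow> x \<noteq> []"
  unfolding cstep_def astep_def by auto

lemma creach_areach: "creach Sig inst x y \<Longrightarrow> areach Sig inst (M + lst x) (M + lst y)"
proof (induction rule: rtranclp_induct)
  case (step y z)
  have "astep Sig inst (lst y + M) Tau (lst z + M)"
    using astep_ctx[of Sig inst "{#y#}" Tau "lst z" M] step(2) cstep_nonempty[OF step(2)]
    by (simp add: cstep_def lst_def)
  then show ?case using step(3) by (simp add: add_ac rtranclp.rtrancl_into_rtrancl)
qed auto

lemma cstep_rule: "rule Sig inst c Tau R \<Longrightarrow> nf R = Some (lst r) \<Longrightarrow> cstep Sig inst (c # xs) (r @ xs)"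
  unfolding cstep_def using astep_chain[of Sig inst c Tau R r xs "{#}"] by simp

lemma astep_concrete: "astep Sig inst M l M' \<Longrightarrow> nf Q = Some M \<Longrightarrow>
   \<exists>Q'. step Sig inst Q l Q' \<and> nf Q' = Some M'"
  unfolding astep_def using step_compl by metis

lemma areach_concrete: "areach Sig inst M M' \<Longrightarrow> nf Q = Some M \<Longrightarrow>
   \<exists>Q'. tau_steps Sig inst Q Q' \<and> nf Q' = Some M'"
proof (induction rule: rtranclp_induct)
  case base then show ?case by (auto simp: tau_steps_def)
next
  case (step y z)
  then obtain Q1 where "tau_steps Sig inst Q Q1" "nf Q1 = Some y" by blast
  moreover obtain Q2 where "step Sig inst Q1 Tau Q2" "nf Q2 = Some z"
    using astep_concrete[OF step(2) \<open>nf Q1 = Some y\<close>] by blast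
  ultimately show ?case by (auto simp: tau_steps_def intro: rtranclp.rtrancl_into_rtrancl)
qed

lemma step_abstract: "step Sig inst P l P' \<Longrightarrow> nf P = Some M \<Longrightarrow> good M \<Longrightarrow>
   \<exists>M'. nf P' = Some M' \<and> astep Sig inst M l M' \<and> good M'"
proof -
  assume a: "step Sig inst P l P'" "nf P = Some M" "good M"
  from step_sound[OF a(1,2)] obtain c xs M0 R where
    h: "M = add_mset (c#xs) M0" "rule Sig inst c l R" "nf P' = padd (Some M0) (aseq (nf R) (Some (lst xs)))"
    by blast
  from good_step[of c xs M0 Sig inst l R] a(3) h obtain M' where
    "padd (Some M0) (aseq (nf R) (Some (lst xs))) = Some M'" "good M'" by auto
  then show ?thesis using h unfolding astep_def by auto
qed

lemma bisim_from_abs: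
  assumes sym: "\<And>M N. Rel M N \<Longrightarrow> Rel N M"
    and gd: "\<And>M N. Rel M N \<Longrightarrow> good M"
    and tr: "\<And>M N l M'. Rel M N \<Longrightarrow> astep Sig inst M l M' \<Longrightarrow> good M' \<Longrightarrow>
        (l = Tau \<and> Rel M' N) \<or>
        (\<exists>N'' N'. areach Sig inst N N'' \<and> Rel M N'' \<and> astep Sig inst N'' l N' \<and> Rel M' N')"
    and P: "nf P = Some M" and Q: "nf Q = Some N" and R: "Rel M N"
  shows "bbisimilar Sig inst P Q"
proof -
  define B where "B = (\<lambda>P Q. \<exists>M N. nf P = Some M \<and> nf Q = Some N \<and> Rel M N)"
  have bs: "bb_sim Sig inst B"
    unfolding bb_sim_def
  proof (intro allI impI)
    fix P Q l P' assume a: "B P Q \<and> step Sig inst P l P'"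
    then obtain M N where MN: "nf P = Some M" "nf Q = Some N" "Rel M N" by (auto simp: B_def)
    then obtain M' where M': "nf P' = Some M'" "astep Sig inst M l M'" "good M'"
      using step_abstract a gd by blast
    from tr[OF MN(3) M'(2,3)]
    show "(\<exists>Q'' Q'. tau_steps Sig inst Q Q'' \<and> step Sig inst Q'' l Q' \<and> B P Q'' \<and> B P' Q') \<or>
          (l = Tau \<and> B P' Q)"
    proof
      assume "l = Tau \<and> Rel M' N" then show ?thesis using M' MN by (auto simp: B_def)
    next
      assume "\<exists>N'' N'. areach Sig inst N N'' \<and> Rel M N'' \<and> astep Sig inst N'' l N' \<and> Rel M' N'"
      then obtain N'' N' where n: "areach Sig inst N N''" "Rel M N''" "astep Sig inst N'' l N'" "Rel M' N'"
        by blast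
      obtain Q'' where "tau_steps Sig inst Q Q''" "nf Q'' = Some N''" using areach_concrete[OF n(1) MN(2)] by blast
      moreover obtain Q' where "step Sig inst Q'' l Q'" "nf Q' = Some N'"
        using astep_concrete[OF n(3) \<open>nf Q'' = Some N''\<close>] by blast
      ultimately show ?thesis using n MN M' unfolding B_def by blast
    qed
  qed
  have "(\<lambda>P Q. B Q P) = B" unfolding B_def using sym by (intro ext) blast
  then have "branching_bisim Sig inst B" using bs by (simp add: branching_bisim_def)
  then show ?thesis unfolding bbisimilar_def B_def using P Q R by blast
qed



lemma lst_eq_single[simp]: "(lst r = {#x#}) = (r = x \<and> x \<noteq> [])" "({#x#} = lst r) = (r = x \<and> x \<noteq> [])"
  by (auto simp: lst_def)
lemma lst_eq_empty[simp]: "(lst r = {#}) = (r = [])" "({#} = lst r) = (r = [])"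
  by (auto simp: lst_def)

lemma lst_Cons[simp]: "lst (c # xs) = {#c # xs#}" by (simp add: lst_def)

lemma aseq_single_lst[simp]: "aseq (Some {#[c]#}) (Some (lst xs)) = Some {#c#xs#}"
  by (cases "xs = []") (auto simp: lst_def)

lemma nf_seqs: "nf (seqs xs) = Some (lst xs)"
  by (induction xs) auto

lemma nf_cseqs: "nf (Seq (Cst c) (seqs xs)) = Some {#c#xs#}"
  by (simp add: nf_seqs)

lemma cstep_rule1: "rule Sig inst c Tau (Cst d) \<Longrightarrow> cstep Sig inst (c # xs) (d # xs)"
  using cstep_rule[of Sig inst c "Cst d" "[d]" xs] by simp
lemma cstep_rule0: "rule Sig inst c Tau Eps \<Longrightarrow> cstep Sig inst (c # xs) xs"
  using cstep_rule[of Sig inst c Eps "[]" xs] by simp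
lemma cstep_rule2: "rule Sig inst c Tau (Seq (Cst d) (Cst e)) \<Longrightarrow> cstep Sig inst (c # xs) (d # e # xs)"
  using cstep_rule[of Sig inst c "Seq (Cst d) (Cst e)" "[d, e]" xs] by simp

context
  fixes Sig :: "'a set" and inst :: "('a list \<times> 'a list) list"
  assumes ok: "\<forall>(u, v) \<in> set inst. u \<noteq> [] \<and> v \<noteq> [] \<and> set u \<subseteq> Sig \<and> set v \<subseteq> Sig"
begin

lemma idx_ok: "k \<in> idx inst \<Longrightarrow> uw inst k \<noteq> [] \<and> vw inst k \<noteq> [] \<and> set (uw inst k) \<subseteq> Sig \<and> set (vw inst k) \<subseteq> Sig"
proof -
  assume "k \<in> idx inst"
  then have m: "inst ! (k - 1) \<in> set inst" by (auto simp: idx_def)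
  obtain u v where uv: "inst ! (k - 1) = (u, v)" by fastforce
  have uvin: "(u, v) \<in> set inst" using m uv by simp
  have "case (u, v) of (u, v) \<Rightarrow> u \<noteq> [] \<and> v \<noteq> [] \<and> set u \<subseteq> Sig \<and> set v \<subseteq> Sig"
    by (rule bspec[OF ok uvin])
  then have "u \<noteq> [] \<and> v \<noteq> [] \<and> set u \<subseteq> Sig \<and> set v \<subseteq> Sig" by simp
  then show ?thesis using uv by (simp add: uw_def vw_def)
qed

lemma idx_nz: "k \<in> idx inst \<Longrightarrow> k \<noteq> 0" by (auto simp: idx_def)

lemma suffix_set: "is_suffix w x \<Longrightarrow> set w \<subseteq> set x" by (auto simp: is_suffix_def)
lemma suffix_tl: "is_suffix (a # w) x \<Longrightarrow> is_suffix w x"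
  by (auto simp: is_suffix_def)
lemma suffix_refl: "is_suffix x x" by (auto simp: is_suffix_def)

lemma Wset_iff: "cW w k \<in> Wset inst \<longleftrightarrow>
   (k \<in> idx inst \<and> (is_suffix w (uw inst k) \<or> is_suffix w (vw inst k))) \<or>
   (k = 0 \<and> (\<exists>j\<in>idx inst. is_suffix w (uw inst j) \<or> is_suffix w (vw inst j)))"
  by (auto simp: Wset_def idx_nz)

lemma Wset_tl: "cW (a # w) k \<in> Wset inst \<Longrightarrow> cW w k \<in> Wset inst"
  by (auto simp: Wset_iff dest: suffix_tl)

lemma Wset_0: "cW w k \<in> Wset inst \<Longrightarrow> cW w 0 \<in> Wset inst"
  by (auto simp: Wset_iff)

lemma Wset_ex: "cW w k \<in> Wset inst \<Longrightarrow> \<exists>j\<in>idx inst. is_suffix w (uw inst j) \<or> is_suffix w (vw inst j)"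
  by (auto simp: Wset_iff)

lemma Wset_sig: "cW w k \<in> Wset inst \<Longrightarrow> set w \<subseteq> Sig"
proof -
  assume "cW w k \<in> Wset inst"
  then obtain j where j: "j \<in> idx inst" "is_suffix w (uw inst j) \<or> is_suffix w (vw inst j)"
    using Wset_ex by blast
  then have "set w \<subseteq> set (uw inst j) \<or> set w \<subseteq> set (vw inst j)" using suffix_set by blast
  then show ?thesis using idx_ok[OF j(1)] by blast
qed

lemma Wset_u: "k \<in> idx inst \<Longrightarrow> cW (uw inst k) k \<in> Wset inst"
  by (simp add: Wset_iff suffix_refl)
lemma Wset_v: "k \<in> idx inst \<Longrightarrow> cW (vw inst k) k \<in> Wset inst"
  by (simp add: Wset_iff suffix_refl)

lemma strip_k: "k \<in> idx inst \<Longrightarrow> cW (p @ w) k \<in> Wset inst \<Longrightarrow> creach Sig inst [cW (p @ w) k] [cW w k]"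
proof (induction p)
  case (Cons a p)
  have w: "cW (a # p @ w) k \<in> Wset inst" using Cons.prems by simp
  have "a \<in> Sig" using Wset_sig[OF Cons.prems(2)] by simp
  then have "cstep Sig inst [cW (a # p @ w) k] [cW (p @ w) k]"
    using cstep_rule1[OF r39[OF Cons.prems(1) w \<open>a \<in> Sig\<close>], where xs="[]"] Cons.prems
    by simp
  moreover have "creach Sig inst [cW (p @ w) k] [cW w k]" using Cons Wset_tl[OF w] by simp
  ultimately have "creach Sig inst [cW (a # p @ w) k] [cW w k]"
    by (rule converse_rtranclp_into_rtranclp[of "cstep Sig inst"])
  then show ?case by simp
qed simp

lemma strip_0: "cW (p @ w) 0 \<in> Wset inst \<Longrightarrow> creach Sig inst [cW (p @ w) 0] [cW w 0]"
proof (induction p)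
  case (Cons a p)
  have w: "cW (a # p @ w) 0 \<in> Wset inst" using Cons.prems by simp
  have "a \<in> Sig" using Wset_sig[OF Cons.prems(1)] by simp
  then have "cstep Sig inst [cW (a # p @ w) 0] [cW (p @ w) 0]"
    using cstep_rule1[OF r40[OF w \<open>a \<in> Sig\<close>], where xs="[]"] Cons.prems
    by simp
  moreover have "creach Sig inst [cW (p @ w) 0] [cW w 0]" using Cons Wset_tl[OF w] by simp
  ultimately have "creach Sig inst [cW (a # p @ w) 0] [cW w 0]"
    by (rule converse_rtranclp_into_rtranclp[of "cstep Sig inst"])
  then show ?case by simp
qed simp

lemma suffix_nil: "is_suffix [] x" by (simp add: is_suffix_def)

lemma W0_vanish: "cW w 0 \<in> Wset inst \<Longrightarrow> creach Sig inst [cW w 0] []"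
proof -
  assume a: "cW w 0 \<in> Wset inst"
  have 1: "creach Sig inst [cW w 0] [cW [] 0]" using strip_0[of w "[]"] a by simp
  have "cW [] 0 \<in> Wset inst" using a suffix_nil unfolding Wset_iff by blast
  then have 2: "cstep Sig inst [cW [] 0] []" using cstep_rule0[OF r42[where Sig=Sig and inst=inst], where xs="[]"] by simp
  show ?thesis by (rule rtranclp.rtrancl_into_rtrancl[of "cstep Sig inst", OF 1 2])
qed

lemma W_vanish: "W \<in> Wset inst \<Longrightarrow> creach Sig inst [W] []"
proof -
  assume a: "W \<in> Wset inst"
  then obtain w k where W: "W = cW w k" using Wset_form by blast
  show ?thesis
  proof (cases "k = 0")
    case True then show ?thesis using W a W0_vanish by simp
  next
    case False
    then have k: "k \<in> idx inst" using a W Wset_iff by blast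
    have a': "cW w k \<in> Wset inst" using a W by simp
    have 1: "cstep Sig inst [cW w k] [cW w 0]"
      using cstep_rule1[OF r41[OF k a'], where xs="[]"] by simp
    have 2: "creach Sig inst [cW w 0] []" using W0_vanish[OF Wset_0[OF a']] .
    show ?thesis unfolding W by (rule converse_rtranclp_into_rtranclp[of "cstep Sig inst", OF 1 2])
  qed
qed

lemma U_to_W: "k \<in> idx inst \<Longrightarrow> is_suffix w (uw inst k) \<Longrightarrow>
   creach Sig inst [cU k] [cW w k] \<and> creach Sig inst [cU k] [cW w 0]"
proof -
  assume k: "k \<in> idx inst" and s: "is_suffix w (uw inst k)"
  then obtain p where p: "uw inst k = p @ w" by (metis is_suffix_def)
  have st: "cstep Sig inst [cU k] [cW (p @ w) k]"
    using cstep_rule1[OF r34[OF k], where xs="[]"] p by simp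
  have wu: "cW (p @ w) k \<in> Wset inst" using Wset_u[OF k] p by simp
  have a1: "creach Sig inst [cU k] [cW w k]"
    by (rule converse_rtranclp_into_rtranclp[of "cstep Sig inst", OF st strip_k[OF k wu]])
  have st2: "cstep Sig inst [cW (p @ w) k] [cW (p @ w) 0]"
    using cstep_rule1[OF r41[OF k wu], where xs="[]"] by simp
  have "creach Sig inst [cW (p @ w) 0] [cW w 0]"
    using strip_0[of p w] Wset_0[OF wu] by simp
  then have "creach Sig inst [cW (p @ w) k] [cW w 0]"
    by (rule converse_rtranclp_into_rtranclp[of "cstep Sig inst", OF st2])
  then have a2: "creach Sig inst [cU k] [cW w 0]"
    by (rule converse_rtranclp_into_rtranclp[of "cstep Sig inst", OF st])
  show ?thesis using a1 a2 by simp
qed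

lemma V_to_W: "k \<in> idx inst \<Longrightarrow> is_suffix w (vw inst k) \<Longrightarrow>
   creach Sig inst [cV k] [cW w k] \<and> creach Sig inst [cV k] [cW w 0]"
proof -
  assume k: "k \<in> idx inst" and s: "is_suffix w (vw inst k)"
  then obtain p where p: "vw inst k = p @ w" by (metis is_suffix_def)
  have st: "cstep Sig inst [cV k] [cW (p @ w) k]"
    using cstep_rule1[OF r35[OF k], where xs="[]"] p by simp
  have wu: "cW (p @ w) k \<in> Wset inst" using Wset_v[OF k] p by simp
  have a1: "creach Sig inst [cV k] [cW w k]"
    by (rule converse_rtranclp_into_rtranclp[of "cstep Sig inst", OF st strip_k[OF k wu]])
  have st2: "cstep Sig inst [cW (p @ w) k] [cW (p @ w) 0]"
    using cstep_rule1[OF r41[OF k wu], where xs="[]"] by simp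
  have "creach Sig inst [cW (p @ w) 0] [cW w 0]"
    using strip_0[of p w] Wset_0[OF wu] by simp
  then have "creach Sig inst [cW (p @ w) k] [cW w 0]"
    by (rule converse_rtranclp_into_rtranclp[of "cstep Sig inst", OF st2])
  then have a2: "creach Sig inst [cV k] [cW w 0]"
    by (rule converse_rtranclp_into_rtranclp[of "cstep Sig inst", OF st])
  show ?thesis using a1 a2 by simp
qed

lemma W_origin: "W \<in> Wset inst \<Longrightarrow> \<exists>y \<in> Uset inst \<union> Vset inst. creach Sig inst [y] [W]"
proof -
  assume a: "W \<in> Wset inst"
  then obtain w k where W: "W = cW w k" using Wset_form by blast
  have Uin: "j \<in> idx inst \<Longrightarrow> cU j \<in> Uset inst \<union> Vset inst" for j by (simp add: Uset_def)
  have Vin: "j \<in> idx inst \<Longrightarrow> cV j \<in> Uset inst \<union> Vset inst" for j by (simp add: Vset_def)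
  from a[unfolded W Wset_iff] show ?thesis
  proof (elim disjE conjE bexE)
    assume "k \<in> idx inst" "is_suffix w (uw inst k)"
    then show ?thesis using U_to_W[of k w] Uin[of k] unfolding W by blast
  next
    assume "k \<in> idx inst" "is_suffix w (vw inst k)"
    then show ?thesis using V_to_W[of k w] Vin[of k] unfolding W by blast
  next
    fix j assume "k = 0" "j \<in> idx inst" "is_suffix w (uw inst j)"
    then show ?thesis using U_to_W[of j w] Uin[of j] unfolding W by blast
  next
    fix j assume "k = 0" "j \<in> idx inst" "is_suffix w (vw inst j)"
    then show ?thesis using V_to_W[of j w] Vin[of j] unfolding W by blast
  qed
qed

end


definition garb :: "('a list \<times> 'a list) list \<Rightarrow> 'a const \<Rightarrow> bool" where
  "garb inst c \<longleftrightarrow> c \<in> {cGu, cGv', cGv, cZ, cG, cG'} \<or> c \<in> Uset inst \<or> c \<in> Vset inst \<or> c \<in> Wset inst"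

fun vu :: "('a list \<times> 'a list) list \<Rightarrow> 'a const list \<Rightarrow> bool" where
  "vu inst [] = True"
| "vu inst (c # xs) = ((c \<in> Vset inst \<and> vu inst xs) \<or> (c \<in> Uset inst \<and> xs \<in> lists (Uset inst)))"

fun Fd :: "('a list \<times> 'a list) list \<Rightarrow> 'a const list \<Rightarrow> bool" where
  "Fd inst [] = False"
| "Fd inst (c # xs) = (if c = cGu then xs \<in> lists (Uset inst)
     else if c = cGv' \<or> c = cZ \<or> c \<in> Wset inst then vu inst xs else vu inst (c # xs))"

lemma U_iff[simp]: "cU k \<in> Uset inst \<longleftrightarrow> k \<in> idx inst" "cV k \<in> Vset inst \<longleftrightarrow> k \<in> idx inst"
  by (auto simp: Uset_def Vset_def)

lemma notU[simp]: "cX \<notin> Uset inst" "cY \<notin> Uset inst" "cZ \<notin> Uset inst" "cI \<notin> Uset inst"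
  "cS \<notin> Uset inst" "cC \<notin> Uset inst" "cC' \<notin> Uset inst" "cD \<notin> Uset inst" "cG \<notin> Uset inst"
  "cG' \<notin> Uset inst" "cGu \<notin> Uset inst" "cGv \<notin> Uset inst" "cGv' \<notin> Uset inst" "cV k \<notin> Uset inst"
  "cW w k \<notin> Uset inst"
  by (auto simp: Uset_def)

lemma notV[simp]: "cX \<notin> Vset inst" "cY \<notin> Vset inst" "cZ \<notin> Vset inst" "cI \<notin> Vset inst"
  "cS \<notin> Vset inst" "cC \<notin> Vset inst" "cC' \<notin> Vset inst" "cD \<notin> Vset inst" "cG \<notin> Vset inst"
  "cG' \<notin> Vset inst" "cGu \<notin> Vset inst" "cGv \<notin> Vset inst" "cGv' \<notin> Vset inst" "cU k \<notin> Vset inst"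
  "cW w k \<notin> Vset inst"
  by (auto simp: Vset_def)

lemma notW[simp]: "cX \<notin> Wset inst" "cY \<notin> Wset inst" "cZ \<notin> Wset inst" "cI \<notin> Wset inst"
  "cS \<notin> Wset inst" "cC \<notin> Wset inst" "cC' \<notin> Wset inst" "cD \<notin> Wset inst" "cG \<notin> Wset inst"
  "cG' \<notin> Wset inst" "cGu \<notin> Wset inst" "cGv \<notin> Wset inst" "cGv' \<notin> Wset inst" "cU k \<notin> Wset inst"
  "cV k \<notin> Wset inst"
  by (auto simp: Wset_def)

lemma Uset_form: "c \<in> Uset inst \<Longrightarrow> \<exists>k. c = cU k \<and> k \<in> idx inst" by (auto simp: Uset_def)
lemma Vset_form: "c \<in> Vset inst \<Longrightarrow> \<exists>k. c = cV k \<and> k \<in> idx inst" by (auto simp: Vset_def)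

lemma vu_lists: "vu inst xs \<Longrightarrow> xs \<in> lists (Uset inst \<union> Vset inst)"
  by (induction xs) auto

lemma lists_U_vu: "us \<in> lists (Uset inst) \<Longrightarrow> vu inst us"
  by (induction us) auto

lemma vu_app: "vs \<in> lists (Vset inst) \<Longrightarrow> us \<in> lists (Uset inst) \<Longrightarrow> vu inst (vs @ us)"
  by (induction vs) (auto simp: lists_U_vu)

lemma vu_split: "vu inst xs \<Longrightarrow> \<exists>vs us. vs \<in> lists (Vset inst) \<and> us \<in> lists (Uset inst) \<and> xs = vs @ us"
proof (induction xs)
  case Nil then show ?case by auto
next
  case (Cons c xs)
  show ?case
  proof (cases "c \<in> Vset inst")
    case True
    then have "vu inst xs" using Cons.prems by (auto dest: Vset_form)
    then obtain vs us where "vs \<in> lists (Vset inst)" "us \<in> lists (Uset inst)" "xs = vs @ us"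
      using Cons.IH by blast
    then show ?thesis using True by (intro exI[of _ "c # vs"] exI[of _ us]) auto
  next
    case False
    then have "c \<in> Uset inst" "xs \<in> lists (Uset inst)" using Cons.prems by auto
    then show ?thesis by (intro exI[of _ "[]"] exI[of _ "c # xs"]) auto
  qed
qed

lemma garb_notbad: "garb inst c \<Longrightarrow> \<not> badc c"
  by (auto simp: garb_def badc_def dest!: Uset_form Vset_form Wset_form)

lemma Fd_garb: "Fd inst x \<Longrightarrow> c \<in> set x \<Longrightarrow> garb inst c"
proof (cases x)
  case (Cons d xs)
  assume a: "Fd inst x" "c \<in> set x"
  show ?thesis
  proof (cases "d = cGu")
    case True then show ?thesis using a Cons by (auto simp: garb_def)
  next
    case False
    then have "vu inst xs \<and> (d = cGv' \<or> d = cZ \<or> d \<in> Wset inst) \<or> vu inst (d # xs)"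
      using a Cons by (auto split: if_splits)
    then show ?thesis using a Cons vu_lists[of inst xs] vu_lists[of inst "d # xs"]
      by (auto simp: garb_def)
  qed
qed simp

lemma Fd_nonempty: "Fd inst x \<Longrightarrow> x \<noteq> []" by (cases x) auto

lemma chain_ok: "(\<forall>c\<in>set x. garb inst c) \<Longrightarrow> \<forall>c\<in>set (butlast x). \<not> badc c"
proof (intro ballI)
  fix c assume a: "\<forall>c\<in>set x. garb inst c" "c \<in> set (butlast x)"
  then have "c \<in> set x" by (rule_tac in_set_butlastD) simp
  then have "garb inst c" using a(1) by simp
  then show "\<not> badc c" by (rule garb_notbad)
qed

lemma good_add[simp]: "good (M + N) \<longleftrightarrow> good M \<and> good N" by (auto simp: good_def)
lemma good_add_mset[simp]: "good (add_mset x M) \<longleftrightarrow> (\<forall>c\<in>set (butlast x). \<not> badc c) \<and> good M"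
  by (auto simp: good_def)
lemma good_empty[simp]: "good {#}" by (auto simp: good_def)

lemma good_Fd: "\<forall>x\<in>#R. Fd inst x \<Longrightarrow> good R"
  unfolding good_def
proof (rule ballI)
  fix x assume a: "\<forall>x\<in>#R. Fd inst x" "x \<in># R"
  then have "Fd inst x" by simp
  then have "\<forall>c\<in>set x. garb inst c" using Fd_garb[of inst x] by blast
  then show "\<forall>c\<in>set (butlast x). \<not> badc c" by (rule chain_ok)
qed

context
  fixes Sig :: "'a set" and inst :: "('a list \<times> 'a list) list"
  assumes ok: "\<forall>(u, v) \<in> set inst. u \<noteq> [] \<and> v \<noteq> [] \<and> set u \<subseteq> Sig \<and> set v \<subseteq> Sig"
begin

lemma cr_step: "cstep Sig inst x y \<Longrightarrow> creach Sig inst y z \<Longrightarrow> creach Sig inst x z"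
  by (rule converse_rtranclp_into_rtranclp[of "cstep Sig inst"])
lemma cr_trans: "creach Sig inst x y \<Longrightarrow> creach Sig inst y z \<Longrightarrow> creach Sig inst x z"
  by (rule rtranclp_trans[of "cstep Sig inst"])
lemma cr_one: "cstep Sig inst x y \<Longrightarrow> creach Sig inst x y"
  by (rule r_into_rtranclp[of "cstep Sig inst"])
lemma ar_trans: "areach Sig inst x y \<Longrightarrow> areach Sig inst y z \<Longrightarrow> areach Sig inst x z"
  by (rule rtranclp_trans[of "\<lambda>M M'. astep Sig inst M Tau M'"])

lemma Z_v: "creach Sig inst [cZ] []"
  by (rule cr_one, rule cstep_rule0[OF r14, where xs="[]"])

lemma garb_vanish: "garb inst c \<Longrightarrow> creach Sig inst [c] []"
proof -
  assume g: "garb inst c"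
  have Gv'_v: "creach Sig inst [cGv'] []"
    by (rule cr_step[OF cstep_rule1[OF r10, where xs="[]"] Z_v])
  have Gu_v: "creach Sig inst [cGu] []"
    by (rule cr_step[OF cstep_rule1[OF r8, where xs="[]"] Gv'_v])
  have Gv_v: "creach Sig inst [cGv] []" by (rule cr_one, rule cstep_rule0[OF r12, where xs="[]"])
  have G_v: "creach Sig inst [cG] []" by (rule cr_one, rule cstep_rule0[OF r22, where xs="[]"])
  have G'_v: "creach Sig inst [cG'] []"
    by (rule cr_step[OF cstep_rule1[OF r33, where xs="[]"] Z_v])
  show ?thesis
  proof (cases "c \<in> Uset inst")
    case True
    then obtain k where k: "c = cU k" "k \<in> idx inst" using Uset_form by blast
    show ?thesis unfolding k(1)
      by (rule cr_step[OF cstep_rule1[OF r34[OF k(2)], where xs="[]"] W_vanish[OF ok Wset_u[OF ok k(2)]]])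
  next
    case nU: False
    show ?thesis
    proof (cases "c \<in> Vset inst")
      case True
      then obtain k where k: "c = cV k" "k \<in> idx inst" using Vset_form by blast
      show ?thesis unfolding k(1)
        by (rule cr_step[OF cstep_rule1[OF r35[OF k(2)], where xs="[]"] W_vanish[OF ok Wset_v[OF ok k(2)]]])
    next
      case nV: False
      show ?thesis
      proof (cases "c \<in> Wset inst")
        case True then show ?thesis using W_vanish[OF ok] by blast
      next
        case False
        then have "c \<in> {cGu, cGv', cGv, cZ, cG, cG'}" using g nU nV by (simp add: garb_def)
        then show ?thesis using Gu_v Gv'_v Gv_v Z_v G_v G'_v by auto
      qed
    qed
  qed
qed

lemma chain_vanish: "\<forall>c\<in>set xs. garb inst c \<Longrightarrow> creach Sig inst xs []"
proof (induction xs)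
  case (Cons c xs)
  have "garb inst c" using Cons.prems by simp
  then have 1: "creach Sig inst (c # xs) xs" using creach_app[OF garb_vanish, of c xs] by simp
  have 2: "creach Sig inst xs []" using Cons by simp
  show ?case by (rule cr_trans[OF 1 2])
qed simp

lemma chain_vanish_ctx: "\<forall>c\<in>set xs. garb inst c \<Longrightarrow> areach Sig inst (M + lst xs) M"
  using creach_areach[OF chain_vanish, of xs M] by (simp add: lst_def)

lemma mset_vanish: "\<forall>x\<in>#R. Fd inst x \<Longrightarrow> areach Sig inst (M + R) M"
proof (induction R)
  case empty then show ?case by simp
next
  case (add x R)
  have "areach Sig inst ((M + R) + lst x) (M + R)"
    using chain_vanish_ctx[of x "M + R"] Fd_garb add.prems by auto
  moreover have "x \<noteq> []" using Fd_nonempty[of inst x] add.prems by simp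
  then have "lst x = {#x#}" by (simp add: lst_def)
  ultimately have "areach Sig inst (M + add_mset x R) (M + R)" by simp
  then show ?case using add by (auto intro: ar_trans)
qed

lemma gen_hub: "rule Sig inst h Tau (Par (Cst h) (Cst g)) \<Longrightarrow> creach Sig inst [g] x \<Longrightarrow>
   areach Sig inst (add_mset [h] M) (add_mset [h] (M + lst x))"
proof -
  assume r: "rule Sig inst h Tau (Par (Cst h) (Cst g))" and c: "creach Sig inst [g] x"
  have a: "astep Sig inst (add_mset [h] M) Tau (add_mset [h] M + lst [g])"
    using astep_single[OF r, of "{#[h], [g]#}" M] by (simp add: add_ac)
  have 1: "areach Sig inst (add_mset [h] M) (add_mset [h] M + lst [g])"
    by (rule r_into_rtranclp[of "\<lambda>M M'. astep Sig inst M Tau M'", OF a])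
  have 2: "areach Sig inst (add_mset [h] M + lst [g]) (add_mset [h] M + lst x)"
    by (rule creach_areach[OF c])
  show ?thesis using ar_trans[OF 1 2] by simp
qed

lemma mset_gen: "(\<And>x M. P x \<Longrightarrow> areach Sig inst (add_mset h M) (add_mset h (add_mset x M))) \<Longrightarrow>
   \<forall>x\<in>#R. P x \<Longrightarrow> areach Sig inst (add_mset h M) (add_mset h (M + R))"
proof (induction R)
  case empty then show ?case by simp
next
  case (add x R)
  then have 1: "areach Sig inst (add_mset h M) (add_mset h (M + R))" by simp
  have "areach Sig inst (add_mset h (M + R)) (add_mset h (add_mset x (M + R)))" using add by simp
  then show ?case using ar_trans[OF 1] by simp
qed

lemma build: "(\<And>d. d \<in> S \<Longrightarrow> rule Sig inst c Tau (Seq (Cst c) (Cst d))) \<Longrightarrow> xs \<in> lists S \<Longrightarrow>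
   creach Sig inst (c # ys) (c # xs @ ys)"
proof (induction xs)
  case (Cons d xs)
  have "cstep Sig inst (c # (xs @ ys)) (c # d # xs @ ys)" using cstep_rule2[OF Cons.prems(1)] Cons.prems by simp
  then show ?case using Cons by (auto intro: rtranclp.rtrancl_into_rtrancl)
qed simp

lemma rl_Gu: "d \<in> Uset inst \<Longrightarrow> rule Sig inst cGu Tau (Seq (Cst cGu) (Cst d))"
  by (auto dest!: Uset_form intro: r6)
lemma rl_Gv': "d \<in> Vset inst \<Longrightarrow> rule Sig inst cGv' Tau (Seq (Cst cGv') (Cst d))"
  by (auto dest!: Vset_form intro: r9)
lemma rl_Gv: "d \<in> Vset inst \<Longrightarrow> rule Sig inst cGv Tau (Seq (Cst cGv) (Cst d))"
  by (auto dest!: Vset_form intro: r11)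
lemma rl_G: "d \<in> Uset inst \<union> Vset inst \<Longrightarrow> rule Sig inst cG Tau (Seq (Cst cG) (Cst d))"
  by (auto dest!: Uset_form Vset_form intro: r20 r21)
lemma rl_G': "d \<in> Uset inst \<union> Vset inst \<union> Wset inst \<Longrightarrow> rule Sig inst cG' Tau (Seq (Cst cG') (Cst d))"
  by (auto dest!: Uset_form Vset_form intro: r29 r30 r31)

lemma build_Gu: "us \<in> lists (Uset inst) \<Longrightarrow> creach Sig inst [cGu] (cGu # us)"
  using build[of "Uset inst" cGu us "[]", OF rl_Gu] by simp

lemma Gu_vu: "vu inst xs \<Longrightarrow> creach Sig inst [cGu] (cGv' # xs) \<and> creach Sig inst [cGu] (cZ # xs) \<and>
    (xs \<noteq> [] \<longrightarrow> creach Sig inst [cGu] xs)"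
proof -
  assume "vu inst xs"
  then obtain vs us where v: "vs \<in> lists (Vset inst)" "us \<in> lists (Uset inst)" "xs = vs @ us"
    using vu_split by blast
  have 1: "creach Sig inst [cGu] (cGu # us)" using build_Gu v by simp
  have 2: "creach Sig inst (cGu # us) (cGv' # us)" by (rule cr_one, rule cstep_rule1[OF r8])
  have 3: "creach Sig inst (cGv' # us) (cGv' # vs @ us)"
    using build[of "Vset inst" cGv' vs us, OF rl_Gv'] v by simp
  have a: "creach Sig inst [cGu] (cGv' # xs)" using cr_trans[OF cr_trans[OF 1 2] 3] v by simp
  have b: "creach Sig inst [cGu] (cZ # xs)" by (rule cr_trans[OF a cr_one[OF cstep_rule1[OF r10]]])
  have c: "creach Sig inst [cGu] xs" by (rule cr_trans[OF b cr_one[OF cstep_rule0[OF r14]]])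
  show ?thesis using a b c by simp
qed

lemma Gu_W: "W \<in> Wset inst \<Longrightarrow> creach Sig inst [cGu] [W]"
proof -
  assume "W \<in> Wset inst"
  then obtain y where y: "y \<in> Uset inst \<union> Vset inst" "creach Sig inst [y] [W]" using W_origin[OF ok] by meson
  have "vu inst [y]" using y(1) by auto
  then have "creach Sig inst [cGu] [y]" using Gu_vu[of "[y]"] by simp
  then show ?thesis by (rule cr_trans[OF _ y(2)])
qed

lemma G_P: "ps \<in> lists (Uset inst \<union> Vset inst) \<Longrightarrow> creach Sig inst [cG] (cG # ps) \<and> creach Sig inst [cG] ps"
proof -
  assume p: "ps \<in> lists (Uset inst \<union> Vset inst)"
  have 1: "creach Sig inst [cG] (cG # ps)" using build[of _ cG ps "[]", OF rl_G p] by simp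
  have 2: "creach Sig inst [cG] ps" by (rule cr_trans[OF 1 cr_one[OF cstep_rule0[OF r22]]])
  show ?thesis using 1 2 by simp
qed

lemma G_WP: "ps \<in> lists (Uset inst \<union> Vset inst) \<Longrightarrow> W \<in> Wset inst \<Longrightarrow> creach Sig inst [cG] (W # ps)"
proof -
  assume p: "ps \<in> lists (Uset inst \<union> Vset inst)" and w: "W \<in> Wset inst"
  then obtain y where y: "y \<in> Uset inst \<union> Vset inst" "creach Sig inst [y] [W]" using W_origin[OF ok] by blast
  have 1: "creach Sig inst [cG] (y # ps)" using G_P[of "y # ps"] p y by simp
  have "creach Sig inst ([y] @ ps) ([W] @ ps)" by (rule creach_app[OF y(2)])
  then have 2: "creach Sig inst (y # ps) (W # ps)" by simp
  show ?thesis by (rule cr_trans[OF 1 2])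
qed

lemma Gv_P: "vs \<in> lists (Vset inst) \<Longrightarrow> creach Sig inst [cGv] (cGv # vs)"
  using build[of "Vset inst" cGv vs "[]", OF rl_Gv] by simp

lemma G'_Q: "qs \<in> lists (Uset inst \<union> Vset inst \<union> Wset inst) \<Longrightarrow>
   creach Sig inst [cG'] (cG' # qs) \<and> creach Sig inst [cG'] (cGv # qs) \<and>
   creach Sig inst [cG'] (cZ # qs) \<and> creach Sig inst [cG'] qs"
proof -
  assume p: "qs \<in> lists (Uset inst \<union> Vset inst \<union> Wset inst)"
  have 1: "creach Sig inst [cG'] (cG' # qs)" using build[of _ cG' qs "[]", OF rl_G' p] by simp
  have 2: "creach Sig inst [cG'] (cGv # qs)" by (rule cr_trans[OF 1 cr_one[OF cstep_rule1[OF r32]]])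
  have 3: "creach Sig inst [cG'] (cZ # qs)" by (rule cr_trans[OF 1 cr_one[OF cstep_rule1[OF r33]]])
  have 4: "creach Sig inst [cG'] qs" by (rule cr_trans[OF 3 cr_one[OF cstep_rule0[OF r14]]])
  show ?thesis using 1 2 3 4 by simp
qed

end


definition KD :: "('a list \<times> 'a list) list \<Rightarrow> 'a const list multiset \<Rightarrow> 'a const list multiset \<Rightarrow> bool" where
  "KD inst H M \<longleftrightarrow> (\<exists>R. M = add_mset [cD] (H + R) \<and> (\<forall>x\<in>#R. Fd inst x))"

definition Rel :: "'a set \<Rightarrow> ('a list \<times> 'a list) list \<Rightarrow> 'a const list multiset \<Rightarrow> 'a const list multiset \<Rightarrow> bool" where
  "Rel Sig inst M N \<longleftrightarrow> good M \<and> good N \<and>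
     ((areach Sig inst M N \<and> areach Sig inst N M) \<or> (\<exists>H. KD inst H M \<and> KD inst H N))"

lemma Rel_sym: "Rel Sig inst M N \<Longrightarrow> Rel Sig inst N M"
  unfolding Rel_def by blast

lemma Rel_good: "Rel Sig inst M N \<Longrightarrow> good M"
  unfolding Rel_def by blast

lemma rule_D: "rule Sig inst cD l Rr \<Longrightarrow> (l = Tau \<and> Rr = Par (Cst cD) (Cst cGu)) \<or> (l = LD \<and> Rr = Cst cC)"
  by (erule rule.cases) auto

lemma Fd_vu: "vu inst xs \<Longrightarrow> xs \<noteq> [] \<Longrightarrow> Fd inst xs"
proof (cases xs)
  case (Cons d ys)
  assume a: "vu inst xs"
  then have "d \<in> Uset inst \<or> d \<in> Vset inst" using Cons by auto
  then show ?thesis using a Cons by (auto dest!: Uset_form Vset_form)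
qed simp

lemma Fd_lst: "vu inst xs \<Longrightarrow> \<forall>x\<in>#lst xs. Fd inst x"
  using Fd_vu by (auto simp: lst_def)

lemma astep_unfold: "astep Sig inst M l M' \<Longrightarrow> \<exists>c xs M0 Rr Y. M = add_mset (c#xs) M0 \<and> rule Sig inst c l Rr \<and>
   aseq (nf Rr) (Some (lst xs)) = Some Y \<and> M' = M0 + Y"
  unfolding astep_def
  apply (elim exE conjE)
  subgoal for c xs M0 R
    apply (rule exI[of _ c], rule exI[of _ xs], rule exI[of _ M0], rule exI[of _ R])
    by (cases "aseq (nf R) (Some (lst xs))") auto
  done

lemma astep_fold: "rule Sig inst c l Rr \<Longrightarrow> aseq (nf Rr) (Some (lst xs)) = Some Y \<Longrightarrow>
   astep Sig inst (add_mset (c#xs) M0) l (M0 + Y)"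
  unfolding astep_def by (intro exI[of _ c] exI[of _ xs] exI[of _ M0] exI[of _ Rr]) simp

context
  fixes Sig :: "'a set" and inst :: "('a list \<times> 'a list) list"
  assumes ok: "\<forall>(u, v) \<in> set inst. u \<noteq> [] \<and> v \<noteq> [] \<and> set u \<subseteq> Sig \<and> set v \<subseteq> Sig"
begin

lemma Fd_tau: "rule Sig inst c Tau Rr \<Longrightarrow> Fd inst (c # xs) \<Longrightarrow>
   \<exists>r. nf Rr = Some (lst r) \<and> (r @ xs \<noteq> [] \<longrightarrow> Fd inst (r @ xs))"
  by (erule rule.cases)
     (auto simp: lists_U_vu Wset_u[OF ok] Wset_v[OF ok] Fd_vu intro: Wset_tl[OF ok] Wset_0[OF ok])

lemma Fd_vis: "rule Sig inst c l Rr \<Longrightarrow> l \<noteq> Tau \<Longrightarrow> Fd inst (c # xs) \<Longrightarrow>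
   c = cGu \<or> c = cGv' \<or> c = cZ \<or> (c \<in> Wset inst \<and> vu inst xs \<and> (\<exists>W'. W' \<in> Wset inst \<and> Rr = Cst W'))"
  by (erule rule.cases) (auto intro: Wset_tl[OF ok] Wset_0[OF ok])


lemma Dgen: "Fd inst x \<Longrightarrow> hd x \<in> {cGu, cGv', cZ} \<Longrightarrow> creach Sig inst [cGu] x"
proof (cases x)
  case (Cons c xs)
  assume a: "Fd inst x" "hd x \<in> {cGu, cGv', cZ}"
  then have "c = cGu \<or> c = cGv' \<or> c = cZ" using Cons by simp
  then show ?thesis
  proof (elim disjE)
    assume "c = cGu" then show ?thesis using a Cons build_Gu[OF ok] by simp
  next
    assume "c = cGv'" then show ?thesis using a Cons Gu_vu[OF ok, of xs] by simp
  next
    assume "c = cZ" then show ?thesis using a Cons Gu_vu[OF ok, of xs] by simp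
  qed
qed simp

lemma Cgen: "Fd inst x \<Longrightarrow> hd x \<notin> {cGu, cGv', cZ} \<Longrightarrow> creach Sig inst [cG] x"
proof (cases x)
  case (Cons c xs)
  assume a: "Fd inst x" "hd x \<notin> {cGu, cGv', cZ}"
  show ?thesis
  proof (cases "c \<in> Wset inst")
    case True
    then have "vu inst xs" using a Cons by simp
    then show ?thesis using G_WP[OF ok vu_lists True] Cons by simp
  next
    case False
    then have "vu inst (c # xs)" using a Cons by (auto split: if_splits)
    then show ?thesis using G_P[OF ok vu_lists] Cons by simp
  qed
qed simp

lemma gen_D1: "creach Sig inst [cGu] x \<Longrightarrow> x \<noteq> [] \<Longrightarrow>
  areach Sig inst (add_mset [cD] M) (add_mset [cD] (add_mset x M))"
  using gen_hub[OF ok r4, of x M] by (simp add: lst_def)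

lemma gen_C1: "creach Sig inst [cG] x \<Longrightarrow> x \<noteq> [] \<Longrightarrow>
  areach Sig inst (add_mset [cC] M) (add_mset [cC] (add_mset x M))"
  using gen_hub[OF ok r18, of x M] by (simp add: lst_def)

lemma Fd_good1: "Fd inst x \<Longrightarrow> \<forall>c\<in>set (butlast x). \<not> badc c"
  using good_Fd[of "{#x#}" inst] by simp

lemma tr_KD:
  assumes KM: "KD inst H M" and KN: "KD inst H N" and gM: "good M" and gN: "good N"
    and st: "astep Sig inst M l M'" and gM': "good M'"
  shows "(l = Tau \<and> Rel Sig inst M' N) \<or>
        (\<exists>N'' N'. areach Sig inst N N'' \<and> Rel Sig inst M N'' \<and> astep Sig inst N'' l N' \<and> Rel Sig inst M' N')"
proof -
  obtain R where R: "M = add_mset [cD] (H + R)" "\<forall>x\<in>#R. Fd inst x" using KM by (auto simp: KD_def)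
  obtain R' where R': "N = add_mset [cD] (H + R')" "\<forall>x\<in>#R'. Fd inst x" using KN by (auto simp: KD_def)
  obtain c xs M0 Rr Y where u: "M = add_mset (c#xs) M0" "rule Sig inst c l Rr"
    "aseq (nf Rr) (Some (lst xs)) = Some Y" "M' = M0 + Y"
    using astep_unfold[OF st] by blast
  have gH: "good H" using gN R' by simp
  have RMN: "Rel Sig inst M N" using gM gN KM KN by (auto simp: Rel_def)
  show ?thesis
  proof (cases "c # xs = [cD]")
    case True
    then have c: "c = cD" "xs = []" and M0: "M0 = H + R" using u(1) R(1) by auto
    from rule_D[OF u(2)[unfolded c]] show ?thesis
    proof
      assume h: "l = Tau \<and> Rr = Par (Cst cD) (Cst cGu)"
      then have "Y = {#[cD], [cGu]#}" using u(3) c by (simp add: lst_def add_mset_commute)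
      then have "M' = add_mset [cD] (H + add_mset [cGu] R)" using u(4) M0 by simp
      then have "KD inst H M'" using R(2) unfolding KD_def by (intro exI[of _ "add_mset [cGu] R"]) simp
      then show ?thesis using h gM' gN KN by (auto simp: Rel_def)
    next
      assume h: "l = LD \<and> Rr = Cst cC"
      then have M': "M' = add_mset [cC] (H + R)" using u(3,4) c M0 by (simp add: lst_def)
      define P1 where "P1 = (\<lambda>x::'a const list. hd x \<in> {cGu, cGv', cZ})"
      define R1 where "R1 = filter_mset P1 R"
      define R2 where "R2 = filter_mset (\<lambda>x. \<not> P1 x) R"
      have RR: "R = R1 + R2" unfolding R1_def R2_def by simp
      have F1: "\<forall>x\<in>#R1. Fd inst x \<and> P1 x" using R(2) unfolding R1_def by simp
      have F2: "\<forall>x\<in>#R2. Fd inst x \<and> \<not> P1 x" using R(2) unfolding R2_def by simp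
      define N'' where "N'' = add_mset [cD] (H + R1)"
      define N' where "N' = add_mset [cC] (H + R1)"
      have a1: "areach Sig inst (add_mset [cD] (H + R')) (add_mset [cD] ((H + R') + R1))"
        apply (rule mset_gen[OF ok, where P="\<lambda>x. Fd inst x \<and> P1 x"])
        using Dgen gen_D1 Fd_nonempty F1 unfolding P1_def by blast+
      have a2: "areach Sig inst (add_mset [cD] (H + R1) + R') (add_mset [cD] (H + R1))"
        by (rule mset_vanish[OF ok R'(2)])
      have "add_mset [cD] ((H + R') + R1) = add_mset [cD] (H + R1) + R'" by (simp add: add_ac)
      have a1': "areach Sig inst N (add_mset [cD] (H + R1) + R')" using a1 R'(1) by (simp add: add_ac)
      have r1: "areach Sig inst N N''" using ar_trans[OF ok a1' a2] unfolding N''_def .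
      have "astep Sig inst (add_mset [cD] (H + R1)) LD ((H + R1) + {#[cC]#})"
        by (rule astep_single[OF r5]) simp
      then have r2: "astep Sig inst N'' l N'" using h unfolding N''_def N'_def by simp
      have gR1: "good R1" using good_Fd[of R1 inst] F1 by simp
      have KN'': "KD inst H N''" unfolding KD_def N''_def using F1 by blast
      have "good N''" using gH gR1 unfolding N''_def by simp
      then have r3: "Rel Sig inst M N''" using gM KM KN'' unfolding Rel_def by blast
      have b1: "areach Sig inst (add_mset [cC] (H + R1) + R2) (add_mset [cC] (H + R1))"
        apply (rule mset_vanish[OF ok]) using F2 by simp
      have b2: "areach Sig inst (add_mset [cC] (H + R1)) (add_mset [cC] ((H + R1) + R2))"
        apply (rule mset_gen[OF ok, where P="\<lambda>x. Fd inst x \<and> \<not> P1 x"])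
        using Cgen gen_C1 Fd_nonempty F2 unfolding P1_def by blast+
      have "add_mset [cC] (H + R1) + R2 = M'" "add_mset [cC] ((H + R1) + R2) = M'"
        using M' RR by (simp_all add: add_ac)
      then have r4: "Rel Sig inst M' N'" using b1 b2 gM' gH gR1 unfolding Rel_def N'_def by simp
      show ?thesis using r1 r2 r3 r4 by blast
    qed
  next
    case False
    then obtain K where K: "H + R = add_mset (c#xs) K" "M0 = add_mset [cD] K"
      using u(1) R(1) by (auto simp: add_eq_conv_ex)
    show ?thesis
    proof (cases "c # xs \<in># H")
      case True
      then obtain H0 where H0: "H = add_mset (c#xs) H0" by (metis mset_add)
      then have "K = H0 + R" using K(1) by simp
      then have M': "M' = add_mset [cD] ((H0 + Y) + R)" using u(4) K(2) by (simp add: add_ac)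
      define N' where "N' = add_mset [cD] ((H0 + Y) + R')"
      have "astep Sig inst (add_mset (c#xs) (add_mset [cD] (H0 + R'))) l (add_mset [cD] (H0 + R') + Y)"
        by (rule astep_fold[OF u(2,3)])
      moreover have "add_mset (c#xs) (add_mset [cD] (H0 + R')) = N" using R'(1) H0 by simp
      moreover have "add_mset [cD] (H0 + R') + Y = N'" unfolding N'_def by (simp add: add_ac)
      ultimately have sN: "astep Sig inst N l N'" by simp
      have gN': "good N'" by (rule astep_good[OF sN gN])
      have "KD inst (H0 + Y) M'" using M' R(2) unfolding KD_def by blast
      moreover have "KD inst (H0 + Y) N'" using R'(2) unfolding KD_def N'_def by blast
      ultimately have "Rel Sig inst M' N'" using gM' gN' unfolding Rel_def by blast
      then show ?thesis using sN RMN by blast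
    next
      case notH: False
      then have "c # xs \<in># R" using K(1) by (metis add_mset_add_single union_iff union_single_eq_member)
      then obtain R0 where R0: "R = add_mset (c#xs) R0" by (metis mset_add)
      then have "K = H + R0" using K(1) by simp
      then have M': "M' = add_mset [cD] (H + R0 + Y)" using u(4) K(2) by (simp add: add_ac)
      have Fc: "Fd inst (c # xs)" using R(2) R0 by (simp del: Fd.simps)
      have FR0: "\<forall>x\<in>#R0. Fd inst x" using R(2) R0 by simp
      show ?thesis
      proof (cases "l = Tau")
        case True
        obtain r where r: "nf Rr = Some (lst r)" "r @ xs \<noteq> [] \<longrightarrow> Fd inst (r @ xs)"
          using Fd_tau[OF u(2)[unfolded True] Fc] by blast
        then have Y: "Y = lst (r @ xs)" using u(3) lst_lst[of r xs] by simp
        have "\<forall>x\<in>#Y. Fd inst x" using Y r(2) by (auto simp: lst_def)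
        then have "KD inst H M'" using M' FR0 unfolding KD_def by (intro exI[of _ "R0 + Y"]) auto
        then show ?thesis using True gM' gN KN unfolding Rel_def by blast
      next
        case vis: False
        from Fd_vis[OF u(2) vis Fc]
        have dj: "c = cGu \<or> c = cGv' \<or> c = cZ \<or> (c \<in> Wset inst \<and> vu inst xs \<and> (\<exists>W'. W' \<in> Wset inst \<and> Rr = Cst W'))" .
        show ?thesis
        proof (cases "c \<in> {cGu, cGv', cZ}")
          case True
          define N'' where "N'' = add_mset (c # xs) N"
          define N' where "N' = N + Y"
          have "areach Sig inst (add_mset [cD] (H + R')) (add_mset [cD] (add_mset (c # xs) (H + R')))"
            by (rule gen_D1[OF Dgen[OF Fc]]) (use True in simp_all)
          then have r1: "areach Sig inst N N''" unfolding N''_def using R'(1) by (simp add: add_mset_commute)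
          have r2: "astep Sig inst N'' l N'" unfolding N''_def N'_def by (rule astep_fold[OF u(2,3)])
          have KN'': "KD inst H N''" unfolding KD_def N''_def using R' Fc
            by (intro exI[of _ "add_mset (c # xs) R'"]) auto
          have gN'': "good N''" unfolding N''_def using gN Fd_good1[OF Fc] by simp
          have r3: "Rel Sig inst M N''" using gM gN'' KM KN'' unfolding Rel_def by blast
          have gN': "good N'" by (rule astep_good[OF r2 gN''])
          have "KD inst (H + Y) M'" using M' FR0 unfolding KD_def
            by (intro exI[of _ R0]) (auto simp: add_ac)
          moreover have "KD inst (H + Y) N'" unfolding KD_def N'_def using R'
            by (intro exI[of _ R']) (auto simp: add_ac)
          ultimately have r4: "Rel Sig inst M' N'" using gM' gN' unfolding Rel_def by blast
          show ?thesis using r1 r2 r3 r4 by blast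
        next
          case False
          then have W: "c \<in> Wset inst \<and> vu inst xs \<and> (\<exists>W'. W' \<in> Wset inst \<and> Rr = Cst W')" using dj by auto
          then obtain W' where W': "W' \<in> Wset inst" "Rr = Cst W'" by blast
          have Y: "Y = {#W' # xs#}" using u(3) W' by simp
          define N'' where "N'' = add_mset [c] N"
          define N' where "N' = add_mset [W'] N"
          have "areach Sig inst (add_mset [cD] (H + R')) (add_mset [cD] (add_mset [c] (H + R')))"
            by (rule gen_D1[OF Gu_W[OF ok]]) (use W in simp_all)
          then have r1: "areach Sig inst N N''" unfolding N''_def using R'(1) by (simp add: add_mset_commute)
          have "astep Sig inst (add_mset (c # []) N) l (N + {#[W']#})"
            by (rule astep_fold[OF u(2)]) (simp add: W' lst_def)
          then have r2: "astep Sig inst N'' l N'" unfolding N''_def N'_def by simp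
          have FcW: "Fd inst [c]" using W by simp
          have KN'': "KD inst H N''" unfolding KD_def N''_def using R' FcW
            by (intro exI[of _ "add_mset [c] R'"]) auto
          have gN'': "good N''" unfolding N''_def using gN by simp
          have r3: "Rel Sig inst M N''" using gM gN'' KM KN'' unfolding Rel_def by blast
          have gN': "good N'" by (rule astep_good[OF r2 gN''])
          have "KD inst H M'" using M' Y FR0 W W' unfolding KD_def
            by (intro exI[of _ "add_mset (W' # xs) R0"]) (auto simp: add_ac)
          moreover have "KD inst H N'" unfolding KD_def N'_def using R' W'
            by (intro exI[of _ "add_mset [W'] R'"]) auto
          ultimately have r4: "Rel Sig inst M' N'" using gM' gN' unfolding Rel_def by blast
          show ?thesis using r1 r2 r3 r4 by blast
        qed
      qed
    qed
  qed
qed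


lemma tr_full: "Rel Sig inst M N \<Longrightarrow> astep Sig inst M l M' \<Longrightarrow> good M' \<Longrightarrow>
   (l = Tau \<and> Rel Sig inst M' N) \<or>
   (\<exists>N'' N'. areach Sig inst N N'' \<and> Rel Sig inst M N'' \<and> astep Sig inst N'' l N' \<and> Rel Sig inst M' N')"
proof -
  assume R: "Rel Sig inst M N" and st: "astep Sig inst M l M'" and g: "good M'"
  have gM: "good M" and gN: "good N" using R by (auto simp: Rel_def)
  from R have "(areach Sig inst M N \<and> areach Sig inst N M) \<or> (\<exists>H. KD inst H M \<and> KD inst H N)"
    by (simp add: Rel_def)
  then show ?thesis
  proof
    assume a: "areach Sig inst M N \<and> areach Sig inst N M"
    have "Rel Sig inst M M" using gM by (simp add: Rel_def)
    moreover have "Rel Sig inst M' M'" using g by (simp add: Rel_def)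
    ultimately show ?thesis using a st by blast
  next
    assume "\<exists>H. KD inst H M \<and> KD inst H N"
    then obtain H where "KD inst H M" "KD inst H N" by blast
    then show ?thesis using tr_KD gM gN st g by blast
  qed
qed

lemma bis: "nf P = Some M \<Longrightarrow> nf Q = Some N \<Longrightarrow> Rel Sig inst M N \<Longrightarrow> bbisimilar Sig inst P Q"
  apply (rule bisim_from_abs[where Rel="Rel Sig inst" and M=M and N=N])
       apply (erule Rel_sym)
      apply (erule Rel_good)
     apply (erule (2) tr_full)
    apply assumption+
  done

lemma KD_rel: "\<forall>x\<in>#R. Fd inst x \<Longrightarrow> \<forall>x\<in>#R'. Fd inst x \<Longrightarrow>
   Rel Sig inst (add_mset [cD] R) (add_mset [cD] R')"
proof -
  assume a: "\<forall>x\<in>#R. Fd inst x" "\<forall>x\<in>#R'. Fd inst x"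
  have "good R" "good R'" using good_Fd a by blast+
  moreover have "KD inst {#} (add_mset [cD] R)" "KD inst {#} (add_mset [cD] R')"
    unfolding KD_def using a by auto
  ultimately show ?thesis unfolding Rel_def by auto
qed

definition hubok where "hubok h g x \<longleftrightarrow> rule Sig inst h Tau (Par (Cst h) (Cst g)) \<and>
   creach Sig inst [g] x \<and> (\<forall>c\<in>set x. garb inst c)"

lemma hub_x: "hubok h g x \<Longrightarrow> areach Sig inst {#[h]#} (add_mset [h] (lst x)) \<and>
   areach Sig inst (add_mset [h] (lst x)) {#[h]#} \<and> good (add_mset [h] (lst x))"
proof -
  assume "hubok h g x"
  then have r: "rule Sig inst h Tau (Par (Cst h) (Cst g))" "creach Sig inst [g] x" "\<forall>c\<in>set x. garb inst c"
    by (auto simp: hubok_def)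
  have 1: "areach Sig inst {#[h]#} (add_mset [h] (lst x))"
    using gen_hub[OF ok r(1,2), of "{#}"] by simp
  have 2: "areach Sig inst (add_mset [h] (lst x)) {#[h]#}"
    using chain_vanish_ctx[OF ok r(3), of "{#[h]#}"] by simp
  have "good (lst x)" using chain_ok[OF r(3)] by (auto simp: lst_def good_def)
  then show ?thesis using 1 2 by simp
qed

lemma hub_rel: "hubok h g x \<Longrightarrow> hubok h g' y \<Longrightarrow>
   Rel Sig inst (add_mset [h] (lst x)) (add_mset [h] (lst y))"
proof -
  assume a: "hubok h g x" "hubok h g' y"
  note hx = hub_x[OF a(1)] and hy = hub_x[OF a(2)]
  have "areach Sig inst (add_mset [h] (lst x)) (add_mset [h] (lst y))"
    using ar_trans[OF ok] hx hy by blast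
  moreover have "areach Sig inst (add_mset [h] (lst y)) (add_mset [h] (lst x))"
    using ar_trans[OF ok] hx hy by blast
  ultimately show ?thesis using hx hy unfolding Rel_def by blast
qed

lemma garb_lists: "xs \<in> lists (Uset inst \<union> Vset inst \<union> Wset inst) \<Longrightarrow> \<forall>c\<in>set xs. garb inst c"
  by (auto simp: garb_def)

end

theorem corollary1:
  fixes Sig :: "'a set" and inst :: "('a list \<times> 'a list) list"
    and Pu Pv P Q :: "'a const list" and W :: "'a const"
  assumes "finite Sig" and "card Sig \<ge> 2"
    and "\<forall>(u, v) \<in> set inst. u \<noteq> [] \<and> v \<noteq> [] \<and> set u \<subseteq> Sig \<and> set v \<subseteq> Sig"
    and "Pu \<in> lists (Uset inst)" and "Pv \<in> lists (Vset inst)"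
    and "P \<in> lists (Uset inst \<union> Vset inst)"
    and "Q \<in> lists (Uset inst \<union> Vset inst \<union> Wset inst)"
    and "W \<in> Wset inst"
  shows
    "(bbisimilar Sig inst (Cst cD) (Par (Cst cD) (Seq (Cst cGu) (seqs Pu))) \<and>
     bbisimilar Sig inst (Par (Cst cD) (Seq (Cst cGu) (seqs Pu)))
                         (Par (Cst cD) (Seq (Cst cGv') (seqs (Pv @ Pu)))) \<and>
     bbisimilar Sig inst (Par (Cst cD) (Seq (Cst cGv') (seqs (Pv @ Pu))))
                         (Par (Cst cD) (Seq (Cst cZ) (seqs (Pv @ Pu)))) \<and>
     bbisimilar Sig inst (Par (Cst cD) (Seq (Cst cZ) (seqs (Pv @ Pu))))
                         (Par (Cst cD) (seqs (Pv @ Pu))) \<and>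
     bbisimilar Sig inst (Par (Cst cD) (seqs (Pv @ Pu)))
                         (Par (Cst cD) (Seq (Cst W) (seqs (Pv @ Pu))))) \<and>
    (bbisimilar Sig inst (Cst cC) (Par (Cst cC) (Seq (Cst cG) (seqs P))) \<and>
     bbisimilar Sig inst (Par (Cst cC) (Seq (Cst cG) (seqs P))) (Par (Cst cC) (seqs P)) \<and>
     bbisimilar Sig inst (Par (Cst cC) (seqs P)) (Par (Cst cC) (Seq (Cst W) (seqs P))) \<and>
     bbisimilar Sig inst (Par (Cst cC) (Seq (Cst W) (seqs P)))
                         (Par (Cst cC) (Seq (Cst cGv) (seqs Pv)))) \<and>
    (bbisimilar Sig inst (Cst cC') (Par (Cst cC') (Seq (Cst cG') (seqs Q))) \<and>
     bbisimilar Sig inst (Par (Cst cC') (Seq (Cst cG') (seqs Q)))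
                         (Par (Cst cC') (Seq (Cst cGv) (seqs Q))) \<and>
     bbisimilar Sig inst (Par (Cst cC') (Seq (Cst cGv) (seqs Q)))
                         (Par (Cst cC') (Seq (Cst cZ) (seqs Q))) \<and>
     bbisimilar Sig inst (Par (Cst cC') (Seq (Cst cZ) (seqs Q))) (Par (Cst cC') (seqs Q)))"
proof -
  note ok = assms(3)
  obtain w k where Wwk: "W = cW w k" using Wset_form assms(8) by blast
  have vPP: "vu inst (Pv @ Pu)" using vu_app assms(4,5) by blast
  define R1 where "R1 = {#cGu # Pu#}"
  define R2 where "R2 = {#cGv' # (Pv @ Pu)#}"
  define R3 where "R3 = {#cZ # (Pv @ Pu)#}"
  define R4 where "R4 = lst (Pv @ Pu)"
  define R5 where "R5 = {#W # (Pv @ Pu)#}"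
  have n0: "nf (Cst cD) = Some (add_mset [cD] {#})" by simp
  have n1: "nf (Par (Cst cD) (Seq (Cst cGu) (seqs Pu))) = Some (add_mset [cD] R1)"
    unfolding R1_def by (simp add: nf_cseqs nf_seqs)
  have n2: "nf (Par (Cst cD) (Seq (Cst cGv') (seqs (Pv @ Pu)))) = Some (add_mset [cD] R2)"
    unfolding R2_def by (simp add: nf_cseqs nf_seqs del: seqs.simps)
  have n3: "nf (Par (Cst cD) (Seq (Cst cZ) (seqs (Pv @ Pu)))) = Some (add_mset [cD] R3)"
    unfolding R3_def by (simp add: nf_cseqs nf_seqs del: seqs.simps)
  have n4: "nf (Par (Cst cD) (seqs (Pv @ Pu))) = Some (add_mset [cD] R4)"
    unfolding R4_def by (simp add: nf_seqs del: seqs.simps)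
  have n5: "nf (Par (Cst cD) (Seq (Cst W) (seqs (Pv @ Pu)))) = Some (add_mset [cD] R5)"
    unfolding R5_def by (simp add: nf_cseqs nf_seqs del: seqs.simps)
  have f0: "\<forall>x\<in>#{#}. Fd inst x" by simp
  have f1: "\<forall>x\<in>#R1. Fd inst x" unfolding R1_def using assms(4) by simp
  have f2: "\<forall>x\<in>#R2. Fd inst x" unfolding R2_def using vPP by simp
  have f3: "\<forall>x\<in>#R3. Fd inst x" unfolding R3_def using vPP by simp
  have f4: "\<forall>x\<in>#R4. Fd inst x" unfolding R4_def using Fd_lst[OF vPP] .
  have f5: "\<forall>x\<in>#R5. Fd inst x" unfolding R5_def using vPP assms(8) Wwk by simp
  note KD = KD_rel[OF ok] and B = bis[OF ok]
  have p1: "bbisimilar Sig inst (Cst cD) (Par (Cst cD) (Seq (Cst cGu) (seqs Pu)))"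
    by (rule B[OF n0 n1 KD[OF f0 f1]])
  have p2: "bbisimilar Sig inst (Par (Cst cD) (Seq (Cst cGu) (seqs Pu)))
                         (Par (Cst cD) (Seq (Cst cGv') (seqs (Pv @ Pu))))"
    by (rule B[OF n1 n2 KD[OF f1 f2]])
  have p3: "bbisimilar Sig inst (Par (Cst cD) (Seq (Cst cGv') (seqs (Pv @ Pu))))
                         (Par (Cst cD) (Seq (Cst cZ) (seqs (Pv @ Pu))))"
    by (rule B[OF n2 n3 KD[OF f2 f3]])
  have p4: "bbisimilar Sig inst (Par (Cst cD) (Seq (Cst cZ) (seqs (Pv @ Pu))))
                         (Par (Cst cD) (seqs (Pv @ Pu)))"
    by (rule B[OF n3 n4 KD[OF f3 f4]])
  have p5: "bbisimilar Sig inst (Par (Cst cD) (seqs (Pv @ Pu)))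
                         (Par (Cst cD) (Seq (Cst W) (seqs (Pv @ Pu))))"
    by (rule B[OF n4 n5 KD[OF f4 f5]])
  have gP: "\<forall>c\<in>set P. garb inst c" using assms(6) by (auto simp: garb_def)
  have gPv: "\<forall>c\<in>set Pv. garb inst c" using assms(5) by (auto simp: garb_def)
  have gQ: "\<forall>c\<in>set Q. garb inst c" using assms(7) by (auto simp: garb_def)
  have gW: "garb inst W" using assms(8) by (simp add: garb_def)
  note HO = hubok_def[OF ok] and HR = hub_rel[OF ok]
  have GP: "creach Sig inst [cG] (cG # P) \<and> creach Sig inst [cG] P" using G_P[OF ok assms(6)] .
  have h21: "hubok Sig inst cC cG []" unfolding HO using r18 garb_vanish[OF ok, of cG]
    by (simp add: garb_def)
  have h22: "hubok Sig inst cC cG (cG # P)" unfolding HO using r18 GP gP by (simp add: garb_def)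
  have h23: "hubok Sig inst cC cG P" unfolding HO using r18 GP gP by simp
  have h24: "hubok Sig inst cC cG (W # P)" unfolding HO using r18 G_WP[OF ok assms(6,8)] gP gW by simp
  have h25: "hubok Sig inst cC cGv (cGv # Pv)" unfolding HO using r19 Gv_P[OF ok assms(5)] gPv
    by (simp add: garb_def)
  have m21: "nf (Cst cC) = Some (add_mset [cC] (lst []))" by (simp add: lst_def)
  have m22: "nf (Par (Cst cC) (Seq (Cst cG) (seqs P))) = Some (add_mset [cC] (lst (cG # P)))"
    by (simp add: nf_cseqs nf_seqs)
  have m23: "nf (Par (Cst cC) (seqs P)) = Some (add_mset [cC] (lst P))"
    by (simp add: nf_seqs del: seqs.simps)
  have m24: "nf (Par (Cst cC) (Seq (Cst W) (seqs P))) = Some (add_mset [cC] (lst (W # P)))"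
    by (simp add: nf_cseqs nf_seqs)
  have m25: "nf (Par (Cst cC) (Seq (Cst cGv) (seqs Pv))) = Some (add_mset [cC] (lst (cGv # Pv)))"
    by (simp add: nf_cseqs nf_seqs)
  have q1: "bbisimilar Sig inst (Cst cC) (Par (Cst cC) (Seq (Cst cG) (seqs P)))"
    by (rule B[OF m21 m22 HR[OF h21 h22]])
  have q2: "bbisimilar Sig inst (Par (Cst cC) (Seq (Cst cG) (seqs P))) (Par (Cst cC) (seqs P))"
    by (rule B[OF m22 m23 HR[OF h22 h23]])
  have q3: "bbisimilar Sig inst (Par (Cst cC) (seqs P)) (Par (Cst cC) (Seq (Cst W) (seqs P)))"
    by (rule B[OF m23 m24 HR[OF h23 h24]])
  have q4: "bbisimilar Sig inst (Par (Cst cC) (Seq (Cst W) (seqs P)))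
                         (Par (Cst cC) (Seq (Cst cGv) (seqs Pv)))"
    by (rule B[OF m24 m25 HR[OF h24 h25]])
  have GQ: "creach Sig inst [cG'] (cG' # Q) \<and> creach Sig inst [cG'] (cGv # Q) \<and>
            creach Sig inst [cG'] (cZ # Q) \<and> creach Sig inst [cG'] Q" using G'_Q[OF ok assms(7)] .
  have h31: "hubok Sig inst cC' cG' []" unfolding HO using r27 garb_vanish[OF ok, of cG']
    by (simp add: garb_def)
  have h32: "hubok Sig inst cC' cG' (cG' # Q)" unfolding HO using r27 GQ gQ by (simp add: garb_def)
  have h33: "hubok Sig inst cC' cG' (cGv # Q)" unfolding HO using r27 GQ gQ by (simp add: garb_def)
  have h34: "hubok Sig inst cC' cG' (cZ # Q)" unfolding HO using r27 GQ gQ by (simp add: garb_def)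
  have h35: "hubok Sig inst cC' cG' Q" unfolding HO using r27 GQ gQ by simp
  have m31: "nf (Cst cC') = Some (add_mset [cC'] (lst []))" by (simp add: lst_def)
  have m32: "nf (Par (Cst cC') (Seq (Cst cG') (seqs Q))) = Some (add_mset [cC'] (lst (cG' # Q)))"
    by (simp add: nf_cseqs nf_seqs)
  have m33: "nf (Par (Cst cC') (Seq (Cst cGv) (seqs Q))) = Some (add_mset [cC'] (lst (cGv # Q)))"
    by (simp add: nf_cseqs nf_seqs)
  have m34: "nf (Par (Cst cC') (Seq (Cst cZ) (seqs Q))) = Some (add_mset [cC'] (lst (cZ # Q)))"
    by (simp add: nf_cseqs nf_seqs)
  have m35: "nf (Par (Cst cC') (seqs Q)) = Some (add_mset [cC'] (lst Q))"
    by (simp add: nf_seqs del: seqs.simps)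
  have s1: "bbisimilar Sig inst (Cst cC') (Par (Cst cC') (Seq (Cst cG') (seqs Q)))"
    by (rule B[OF m31 m32 HR[OF h31 h32]])
  have s2: "bbisimilar Sig inst (Par (Cst cC') (Seq (Cst cG') (seqs Q)))
                         (Par (Cst cC') (Seq (Cst cGv) (seqs Q)))"
    by (rule B[OF m32 m33 HR[OF h32 h33]])
  have s3: "bbisimilar Sig inst (Par (Cst cC') (Seq (Cst cGv) (seqs Q)))
                         (Par (Cst cC') (Seq (Cst cZ) (seqs Q)))"
    by (rule B[OF m33 m34 HR[OF h33 h34]])
  have s4: "bbisimilar Sig inst (Par (Cst cC') (Seq (Cst cZ) (seqs Q))) (Par (Cst cC') (seqs Q))"
    by (rule B[OF m34 m35 HR[OF h34 h35]])
  show ?thesis using p1 p2 p3 p4 p5 q1 q2 q3 q4 s1 s2 s3 s4 by blast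
qed



end
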